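(* Let $G$ be a $4$-connected $1$-plane graph, let $u$ be a vertex of $G$, and let $ux$ and $uy$ be two edges of $G$. Let $S$ be the set of edges incident with $u$ lying strictly between $ux$ and $uy$ in $\operatorname{rot}_D(u)$ (going counter-clockwise from $ux$ to $uy$). If $|S|\ge 2$, then the edge $xy$, if it exists, does not cross any edge in $S$.
   Context: A $1$-plane graph is a finite simple graph $G$ together with a fixed drawing $D$ in the plane in which each edge is crossed at most once, no edge crosses itself, no two edges cross more than once, and no two edges sharing an endvertex cross. The rotation $\operatorname{rot}_D(u)$ of a vertex $u$ is the cyclic counter-clockwise order in which the edges incident with $u$ leave $u$ in $D$. $4$-connected means vertex-connectivity at least $4$. *)

theory Defs
  imports "HOL-Analysis.Analysis"
begin

definition simple_graph :: "'v set \<Rightarrow> ('v \<Rightarrow> 'v \<Rightarrow> bool) \<Rightarrow> bool" where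
  "simple_graph V E \<longleftrightarrow> finite V \<and>
     (\<forall>a b. E a b \<longrightarrow> a \<in> V \<and> b \<in> V \<and> a \<noteq> b \<and> E b a)"

definition graph_connected :: "'v set \<Rightarrow> ('v \<Rightarrow> 'v \<Rightarrow> bool) \<Rightarrow> bool" where
  "graph_connected V E \<longleftrightarrow>
     (\<forall>a\<in>V. \<forall>b\<in>V. (\<lambda>x y. E x y \<and> x \<in> V \<and> y \<in> V)\<^sup>*\<^sup>* a b)"

definition k_connected :: "'v set \<Rightarrow> ('v \<Rightarrow> 'v \<Rightarrow> bool) \<Rightarrow> nat \<Rightarrow> bool" where
  "k_connected V E k \<longleftrightarrow> card V > k \<and>
     (\<forall>X. X \<subseteq> V \<longrightarrow> card X < k \<longrightarrow> graph_connected (V - X) E)"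

text \<open>A drawing: pos places each vertex at a point of the plane (complex numbers),
and D a b is the curve (parametrised by [0,1]) drawing the edge ab, traversed
from a to b; D b a is the same curve reversed.\<close>

definition drawing ::
  "'v set \<Rightarrow> ('v \<Rightarrow> 'v \<Rightarrow> bool) \<Rightarrow> ('v \<Rightarrow> complex) \<Rightarrow> ('v \<Rightarrow> 'v \<Rightarrow> real \<Rightarrow> complex) \<Rightarrow> bool" where
  "drawing V E pos D \<longleftrightarrow> inj_on pos V \<and>
     (\<forall>a b. E a b \<longrightarrow>
        arc (D a b) \<and> pathstart (D a b) = pos a \<and> pathfinish (D a b) = pos b \<and>
        D b a = reversepath (D a b) \<and>
        (\<forall>t\<in>{0<..<1}. D a b t \<notin> pos ` V))"

definition crosses :: "('v \<Rightarrow> 'v \<Rightarrow> real \<Rightarrow> complex) \<Rightarrow> 'v \<Rightarrow> 'v \<Rightarrow> 'v \<Rightarrow> 'v \<Rightarrow> bool" where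
  "crosses D a b c d \<longleftrightarrow> (\<exists>s\<in>{0<..<1}. \<exists>t\<in>{0<..<1}. D a b s = D c d t)"

text \<open>1-plane drawing: each edge is crossed at most once, no two edges cross more
than once, and edges with a common end do not cross (no self-crossings are
already excluded since each edge is drawn as an arc).\<close>
definition one_plane ::
  "'v set \<Rightarrow> ('v \<Rightarrow> 'v \<Rightarrow> bool) \<Rightarrow> ('v \<Rightarrow> complex) \<Rightarrow> ('v \<Rightarrow> 'v \<Rightarrow> real \<Rightarrow> complex) \<Rightarrow> bool" where
  "one_plane V E pos D \<longleftrightarrow> simple_graph V E \<and> drawing V E pos D \<and>
     \<comment> \<open>no two edges sharing an endvertex cross\<close>
     (\<forall>a b c d. E a b \<and> E c d \<and> {a,b} \<noteq> {c,d} \<and> {a,b} \<inter> {c,d} \<noteq> {} \<longrightarrow>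
        \<not> crosses D a b c d) \<and>
     \<comment> \<open>no two edges cross more than once\<close>
     (\<forall>a b c d. E a b \<and> E c d \<and> {a,b} \<noteq> {c,d} \<longrightarrow>
        (\<forall>s1\<in>{0<..<1}. \<forall>t1\<in>{0<..<1}. \<forall>s2\<in>{0<..<1}. \<forall>t2\<in>{0<..<1}.
           D a b s1 = D c d t1 \<longrightarrow> D a b s2 = D c d t2 \<longrightarrow> s1 = s2)) \<and>
     \<comment> \<open>each edge is crossed (by other edges) at most once\<close>
     (\<forall>a b c d c' d'. E a b \<and> E c d \<and> E c' d' \<and> {a,b} \<noteq> {c,d} \<and> {a,b} \<noteq> {c',d'} \<and>
        crosses D a b c d \<and> crosses D a b c' d' \<longrightarrow> {c,d} = {c',d'})"

definition first_hit :: "('v \<Rightarrow> complex) \<Rightarrow> ('v \<Rightarrow> 'v \<Rightarrow> real \<Rightarrow> complex) \<Rightarrow> 'v \<Rightarrow> 'v \<Rightarrow> real \<Rightarrow> complex" where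
  "first_hit pos D u a r = D u a (Inf {t\<in>{0..1}. dist (D u a t) (pos u) = r})"

text \<open>Orientation of a triangle: positive iff p, q, s are counter-clockwise.\<close>
definition orient :: "complex \<Rightarrow> complex \<Rightarrow> complex \<Rightarrow> real" where
  "orient p q s = Im (cnj (q - p) * (s - p))"

text \<open>In the rotation at u, edge uw lies strictly between ua and ub going
counter-clockwise from ua to ub: on all sufficiently small circles around u,
the first points where the edges ua, uw, ub reach the circle appear in this
counter-clockwise cyclic order.\<close>
definition rot_between ::
  "('v \<Rightarrow> complex) \<Rightarrow> ('v \<Rightarrow> 'v \<Rightarrow> real \<Rightarrow> complex) \<Rightarrow> 'v \<Rightarrow> 'v \<Rightarrow> 'v \<Rightarrow> 'v \<Rightarrow> bool" where
  "rot_between pos D u a w b \<longleftrightarrow> a \<noteq> w \<and> w \<noteq> b \<and> a \<noteq> b \<and>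
     (\<exists>r0>0. \<forall>r. 0 < r \<and> r < r0 \<longrightarrow>
        orient (first_hit pos D u a r) (first_hit pos D u w r) (first_hit pos D u b r) > 0)"

end

theory Submission
  imports Defs
begin


locale op1 =
  fixes V :: "'v set" and E :: "'v \<Rightarrow> 'v \<Rightarrow> bool"
    and pos :: "'v \<Rightarrow> complex" and D :: "'v \<Rightarrow> 'v \<Rightarrow> real \<Rightarrow> complex"
  assumes op: "one_plane V E pos D"
begin

definition I :: "'v \<Rightarrow> 'v \<Rightarrow> complex set" where
  "I a b = D a b ` {0<..<1}"

lemma sg: "simple_graph V E" using op by (simp add: one_plane_def)
lemma dr: "drawing V E pos D" using op by (simp add: one_plane_def)

lemma E_V: "E a b \<Longrightarrow> a \<in> V \<and> b \<in> V \<and> a \<noteq> b \<and> E b a"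
  using sg by (simp add: simple_graph_def)

lemma finV: "finite V" using sg by (simp add: simple_graph_def)

lemma inj: "inj_on pos V" using dr by (simp add: drawing_def)

lemma posinj: "a \<in> V \<Longrightarrow> b \<in> V \<Longrightarrow> pos a = pos b \<Longrightarrow> a = b"
  using inj by (meson inj_onD)

lemma E_arc: "E a b \<Longrightarrow> arc (D a b)"
  and E_start: "E a b \<Longrightarrow> pathstart (D a b) = pos a"
  and E_fin: "E a b \<Longrightarrow> pathfinish (D a b) = pos b"
  and E_rev: "E a b \<Longrightarrow> D b a = reversepath (D a b)"
  and E_int: "E a b \<Longrightarrow> t \<in> {0<..<1} \<Longrightarrow> D a b t \<notin> pos ` V"
  using dr by (auto simp: drawing_def)

lemma E_0: "E a b \<Longrightarrow> D a b 0 = pos a"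
  using E_start by (simp add: pathstart_def)
lemma E_1: "E a b \<Longrightarrow> D a b 1 = pos b"
  using E_fin by (simp add: pathfinish_def)

lemma E_injD: "E a b \<Longrightarrow> s \<in> {0..1} \<Longrightarrow> t \<in> {0..1} \<Longrightarrow> D a b s = D a b t \<Longrightarrow> s = t"
proof -
  assume "E a b" "s \<in> {0..1}" "t \<in> {0..1}" "D a b s = D a b t"
  moreover have "inj_on (D a b) {0..1}" using E_arc[OF \<open>E a b\<close>] by (simp add: arc_def)
  ultimately show ?thesis by (meson inj_onD)
qed

lemma E_cont: "E a b \<Longrightarrow> continuous_on {0..1} (D a b)"
  using E_arc by (simp add: arc_def path_def)

lemma img_split: "E a b \<Longrightarrow> path_image (D a b) = {pos a, pos b} \<union> I a b"
proof -
  assume e: "E a b"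
  have "{0..1::real} = {0,1} \<union> {0<..<1}" by auto
  then show ?thesis using E_0[OF e] E_1[OF e] by (auto simp: path_image_def I_def)
qed

lemma I_V: "E a b \<Longrightarrow> I a b \<inter> pos ` V = {}"
proof -
  assume e: "E a b"
  show ?thesis
  proof (rule ccontr)
    assume "I a b \<inter> pos ` V \<noteq> {}"
    then obtain p where p1: "p \<in> I a b" and p2: "p \<in> pos ` V" by blast
    from p1 obtain t where t: "t \<in> {0<..<1}" "p = D a b t" by (auto simp: I_def)
    show False using E_int[OF e t(1)] p2 t(2) by simp
  qed
qed

lemma I_sym: "E a b \<Longrightarrow> I b a = I a b"
proof -
  assume e: "E a b"
  have "D b a ` {0<..<1} = D a b ` {0<..<1}"
  proof
    show "D b a ` {0<..<1} \<subseteq> D a b ` {0<..<1}"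
    proof
      fix p assume "p \<in> D b a ` {0<..<1}"
      then obtain s where s: "s \<in> {0<..<1}" "p = D b a s" by auto
      have "D a b (1 - s) = p" using E_rev[OF e] s by (simp add: reversepath_def)
      moreover have "1 - s \<in> {0<..<1}" using s by auto
      ultimately show "p \<in> D a b ` {0<..<1}" by blast
    qed
    show "D a b ` {0<..<1} \<subseteq> D b a ` {0<..<1}"
    proof
      fix p assume "p \<in> D a b ` {0<..<1}"
      then obtain s where s: "s \<in> {0<..<1}" "p = D a b s" by auto
      have "D b a (1 - s) = p" using E_rev[OF e] s by (simp add: reversepath_def)
      moreover have "1 - s \<in> {0<..<1}" using s by auto
      ultimately show "p \<in> D b a ` {0<..<1}" by blast
    qed
  qed
  then show ?thesis by (simp add: I_def)
qed

lemma crosses_I: "crosses D a b c d \<longleftrightarrow> I a b \<inter> I c d \<noteq> {}"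
  by (auto simp: crosses_def I_def)

lemma cl3: "\<forall>a b c d. E a b \<and> E c d \<and> {a,b} \<noteq> {c,d} \<and> {a,b} \<inter> {c,d} \<noteq> {} \<longrightarrow>
        \<not> crosses D a b c d"
  using op unfolding one_plane_def by (elim conjE) assumption

lemma cl4: "\<forall>a b c d. E a b \<and> E c d \<and> {a,b} \<noteq> {c,d} \<longrightarrow>
        (\<forall>s1\<in>{0<..<1}. \<forall>t1\<in>{0<..<1}. \<forall>s2\<in>{0<..<1}. \<forall>t2\<in>{0<..<1}.
           D a b s1 = D c d t1 \<longrightarrow> D a b s2 = D c d t2 \<longrightarrow> s1 = s2)"
  using op unfolding one_plane_def by (elim conjE) assumption

lemma cl5: "\<forall>a b c d c' d'. E a b \<and> E c d \<and> E c' d' \<and> {a,b} \<noteq> {c,d} \<and> {a,b} \<noteq> {c',d'} \<and>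
        crosses D a b c d \<and> crosses D a b c' d' \<longrightarrow> {c,d} = {c',d'}"
  using op unfolding one_plane_def by (elim conjE) assumption

lemma share_nocross:
  "E a b \<Longrightarrow> E c d \<Longrightarrow> {a,b} \<noteq> {c,d} \<Longrightarrow> {a,b} \<inter> {c,d} \<noteq> {} \<Longrightarrow> I a b \<inter> I c d = {}"
  using cl3[rule_format, of a b c d] crosses_I by simp

lemma once_param:
  "E a b \<Longrightarrow> E c d \<Longrightarrow> {a,b} \<noteq> {c,d} \<Longrightarrow> s1 \<in> {0<..<1} \<Longrightarrow> t1 \<in> {0<..<1} \<Longrightarrow>
   s2 \<in> {0<..<1} \<Longrightarrow> t2 \<in> {0<..<1} \<Longrightarrow> D a b s1 = D c d t1 \<Longrightarrow> D a b s2 = D c d t2 \<Longrightarrow> s1 = s2"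
  using cl4[rule_format, of a b c d s1 t1 s2 t2] by simp

lemma once_edge:
  "E a b \<Longrightarrow> E c d \<Longrightarrow> E c' d' \<Longrightarrow> {a,b} \<noteq> {c,d} \<Longrightarrow> {a,b} \<noteq> {c',d'} \<Longrightarrow>
   I a b \<inter> I c d \<noteq> {} \<Longrightarrow> I a b \<inter> I c' d' \<noteq> {} \<Longrightarrow> {c,d} = {c',d'}"
  using cl5[rule_format, of a b c d c' d'] crosses_I by simp

lemma img_meet:
  assumes "E a b" "E c d" "I a b \<inter> I c d = {}"
  shows "path_image (D a b) \<inter> path_image (D c d) = pos ` ({a,b} \<inter> {c,d})"
proof -
  have V: "a \<in> V" "b \<in> V" "c \<in> V" "d \<in> V" using E_V assms by blast+
  have P: "pos a \<in> pos ` V" "pos b \<in> pos ` V" "pos c \<in> pos ` V" "pos d \<in> pos ` V"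
    using V by auto
  have i1: "I a b \<inter> pos ` V = {}" by (rule I_V[OF assms(1)])
  have i2: "I c d \<inter> pos ` V = {}" by (rule I_V[OF assms(2)])
  have "path_image (D a b) \<inter> path_image (D c d) = ({pos a, pos b} \<union> I a b) \<inter> ({pos c, pos d} \<union> I c d)"
    using img_split[OF assms(1)] img_split[OF assms(2)] by simp
  also have "\<dots> = {pos a, pos b} \<inter> {pos c, pos d}"
  proof
    show "({pos a, pos b} \<union> I a b) \<inter> ({pos c, pos d} \<union> I c d) \<subseteq> {pos a, pos b} \<inter> {pos c, pos d}"
    proof
      fix q assume q: "q \<in> ({pos a, pos b} \<union> I a b) \<inter> ({pos c, pos d} \<union> I c d)"
      show "q \<in> {pos a, pos b} \<inter> {pos c, pos d}"
      proof (cases "q \<in> I a b")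
        case True
        then have "q \<notin> pos ` V" using i1 by auto
        then have "q \<in> I c d" using q P by auto
        then show ?thesis using True assms(3) by auto
      next
        case False
        then have qa: "q \<in> {pos a, pos b}" using q by auto
        then have "q \<in> pos ` V" using P by auto
        then have "q \<notin> I c d" using i2 by auto
        then show ?thesis using q qa by auto
      qed
    qed
  qed auto
  also have "\<dots> = pos ` {a,b} \<inter> pos ` {c,d}" by simp
  also have "\<dots> = pos ` ({a,b} \<inter> {c,d})"
    by (rule inj_on_image_Int[symmetric, OF inj]) (use V in auto)
  finally show ?thesis .
qed

lemma u_not_I: "E a b \<Longrightarrow> v \<in> V \<Longrightarrow> pos v \<notin> I a b"
proof
  assume e: "E a b" and v: "v \<in> V" and p: "pos v \<in> I a b"
  have "pos v \<in> I a b \<inter> pos ` V" using v p by simp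
  then show False using I_V[OF e] by simp
qed

lemma vert_on_img: "E a b \<Longrightarrow> v \<in> V \<Longrightarrow> pos v \<in> path_image (D a b) \<Longrightarrow> v = a \<or> v = b"
proof -
  assume e: "E a b" and v: "v \<in> V" and p: "pos v \<in> path_image (D a b)"
  have "pos v \<notin> I a b" using u_not_I[OF e v] .
  then have "pos v = pos a \<or> pos v = pos b" using p img_split[OF e] by simp
  moreover have "a \<in> V" "b \<in> V" using E_V[OF e] by auto
  ultimately show ?thesis using posinj[OF v] by metis
qed

end


lemma hit:
  fixes g :: "real \<Rightarrow> complex"
  assumes "arc g" "g 0 = u" "0 < r" "t1 \<in> {0..1}" "r < dist (g t1) u"
  defines "\<tau> \<equiv> Inf {t\<in>{0..1}. dist (g t) u = r}"
  shows "\<tau> \<in> {0<..<1}" "dist (g \<tau>) u = r" "\<And>t. 0 \<le> t \<Longrightarrow> t < \<tau> \<Longrightarrow> dist (g t) u < r"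
    "\<And>t. t \<in> {0..1} \<Longrightarrow> r < dist (g t) u \<Longrightarrow> \<tau> < t"
proof -
  let ?S = "{t\<in>{0..1}. dist (g t) u = r}"
  have cont: "continuous_on {0..1} g" using assms(1) by (simp add: arc_def path_def)
  have contd: "continuous_on {0..1} (\<lambda>t. dist (g t) u)"
    by (intro continuous_intros cont)
  have ex: "\<And>t. t \<in> {0..1} \<Longrightarrow> r \<le> dist (g t) u \<Longrightarrow> \<exists>t'. 0 \<le> t' \<and> t' \<le> t \<and> dist (g t') u = r"
  proof -
    fix t assume t: "t \<in> {0..1}" "r \<le> dist (g t) u"
    have "continuous_on {0..t} (\<lambda>t. dist (g t) u)"
      by (rule continuous_on_subset[OF contd]) (use t(1) in auto)
    moreover have "dist (g 0) u \<le> r" using assms by simp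
    ultimately show "\<exists>t'. 0 \<le> t' \<and> t' \<le> t \<and> dist (g t') u = r"
      using IVT'[of "\<lambda>t. dist (g t) u" 0 r t] t by auto
  qed
  have ne: "?S \<noteq> {}"
  proof -
    obtain t' where "0 \<le> t'" "t' \<le> t1" "dist (g t') u = r" using ex[of t1] assms(4,5) by force
    then have "t' \<in> ?S" using assms(4) by auto
    then show ?thesis by blast
  qed
  have cl: "closed ?S"
    by (rule continuous_closed_preimage_constant[OF contd]) simp
  have bdd: "bdd_below ?S" by (rule bdd_belowI[of _ 0]) auto
  have inS: "\<tau> \<in> ?S" unfolding \<tau>_def by (rule closed_contains_Inf[OF ne bdd cl])
  then show d: "dist (g \<tau>) u = r" by simp
  have le: "\<And>t. t \<in> ?S \<Longrightarrow> \<tau> \<le> t" unfolding \<tau>_def by (rule cInf_lower[OF _ bdd])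
  show lt: "\<And>t. t \<in> {0..1} \<Longrightarrow> r < dist (g t) u \<Longrightarrow> \<tau> < t"
  proof -
    fix t assume t: "t \<in> {0..1}" "r < dist (g t) u"
    then obtain t' where t': "0 \<le> t'" "t' \<le> t" "dist (g t') u = r" using ex by force
    then have "\<tau> \<le> t'" using le t by auto
    moreover have "t' \<noteq> t" using t t' by auto
    ultimately show "\<tau> < t" using t' by auto
  qed
  have "\<tau> \<noteq> 0" using d assms by auto
  moreover have "\<tau> < 1" using lt[OF assms(4,5)] assms(4) by auto
  ultimately show "\<tau> \<in> {0<..<1}" using inS by auto
  show "\<And>t. 0 \<le> t \<Longrightarrow> t < \<tau> \<Longrightarrow> dist (g t) u < r"
  proof (rule ccontr)
    fix t assume t: "0 \<le> t" "t < \<tau>" "\<not> dist (g t) u < r"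
    have "t \<in> {0..1}" using t inS by auto
    then obtain t' where "0 \<le> t'" "t' \<le> t" "dist (g t') u = r" using ex t by force
    then have "\<tau> \<le> t'" using le \<open>t \<in> {0..1}\<close> by auto
    then show False using \<open>t' \<le> t\<close> t by auto
  qed
qed

lemma orient_circ:
  fixes u :: complex and \<rho> a b c :: real
  shows "orient (u + of_real \<rho> * cis a) (u + of_real \<rho> * cis c) (u + of_real \<rho> * cis b)
       = 4 * \<rho>^2 * sin ((b - c)/2) * sin ((c - a)/2) * sin ((b - a)/2)"
proof -
  have "orient (u + of_real \<rho> * cis a) (u + of_real \<rho> * cis c) (u + of_real \<rho> * cis b)
     = \<rho>^2 * ((cos c - cos a) * (sin b - sin a) - (sin c - sin a) * (cos b - cos a))"
    by (simp add: orient_def algebra_simps power2_eq_square)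
  also have "(cos c - cos a) * (sin b - sin a) - (sin c - sin a) * (cos b - cos a)
     = 4 * sin ((b - c)/2) * sin ((c - a)/2) * sin ((b - a)/2)"
  proof -
    define p q r where "p = a/2" "q = c/2" "r = b/2"
    have A: "a = 2*p" "c = 2*q" "b = 2*r" using p_q_r_def by auto
    have s1: "(b - c)/2 = r - q" "(c - a)/2 = q - p" "(b - a)/2 = r - p" using A by auto
    show ?thesis unfolding s1 unfolding A
      apply (simp only: sin_diff cos_diff sin_double cos_double)
      using sin_cos_squared_add[of p] sin_cos_squared_add[of q] sin_cos_squared_add[of r]
      by algebra
  qed
  finally show ?thesis by simp
qed


lemma polar_rep:
  fixes h u :: complex
  assumes "dist h u = \<rho>" "\<rho> > 0"
  shows "\<exists>\<theta>. h = u + of_real \<rho> * cis \<theta>"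
proof -
  have "rcis (cmod (h - u)) (Arg (h - u)) = h - u" by (rule rcis_cmod_Arg)
  moreover have "cmod (h - u) = \<rho>" using assms by (simp add: dist_norm)
  ultimately have "h - u = of_real \<rho> * cis (Arg (h - u))" by (simp add: rcis_def)
  then show ?thesis by (metis add.commute diff_add_cancel)
qed

lemma cis_norm_angle:
  fixes \<theta> \<alpha> :: real
  shows "\<exists>\<theta>'. cis \<theta>' = cis \<theta> \<and> \<alpha> \<le> \<theta>' \<and> \<theta>' < \<alpha> + 2*pi"
proof -
  define k where "k = \<lfloor>(\<theta> - \<alpha>) / (2*pi)\<rfloor>"
  define \<theta>' where "\<theta>' = \<theta> - 2*pi*k"
  have "cis \<theta>' = cis \<theta> * cis (- (2*pi*k))"
    by (simp add: \<theta>'_def cis_mult)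
  also have "cis (- (2*pi*k)) = 1"
    using cis_multiple_2pi[of "- of_int k"] by simp
  finally have c: "cis \<theta>' = cis \<theta>" by simp
  have k1: "k \<le> (\<theta> - \<alpha>) / (2*pi)" unfolding k_def by (rule of_int_floor_le)
  have k2: "(\<theta> - \<alpha>) / (2*pi) < k + 1" unfolding k_def by linarith
  have p: "2*pi > 0" by simp
  from k1 have "k * (2*pi) \<le> \<theta> - \<alpha>" using p by (simp add: le_divide_eq)
  moreover from k2 have "\<theta> - \<alpha> < (k+1) * (2*pi)" using p by (simp add: divide_less_eq)
  ultimately have "\<alpha> \<le> \<theta>'" "\<theta>' < \<alpha> + 2*pi" unfolding \<theta>'_def by (auto simp: algebra_simps)
  then show ?thesis using c by blast
qed

lemma cis_eq_range:
  assumes "cis a = cis b" "0 < a - b" "a - b < 2*pi"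
  shows False
proof -
  have "cis (a - b) = 1" using assms(1) by (simp add: cis_divide[symmetric])
  then have "cos (a - b) = 1" using arg_cong[where f=Re, OF \<open>cis (a - b) = 1\<close>] by (simp add: cis.code complex_eq_iff)
  then obtain n :: int where n: "a - b = of_int n * 2 * pi" using cos_one_2pi_int by blast
  then have "0 < n" using assms(2) by (simp add: zero_less_mult_iff)
  moreover have "n < 1" using assms(3) n by simp
  ultimately show False by simp
qed

lemma sin_pos_half: "0 < x \<Longrightarrow> x < 2*pi \<Longrightarrow> sin (x/2) > 0"
  by (rule sin_gt_zero) auto

lemma angle_core:
  fixes u hq :: complex and \<rho> \<alpha> \<beta> :: real
  assumes "\<rho> > 0" "dist hq u = \<rho>" "\<alpha> \<le> \<beta>" "\<beta> < \<alpha> + 2*pi"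
    and o: "orient (u + of_real \<rho> * cis \<alpha>) hq (u + of_real \<rho> * cis \<beta>) > 0"
  shows "\<exists>\<gamma>. hq = u + of_real \<rho> * cis \<gamma> \<and> \<alpha> < \<gamma> \<and> \<gamma> < \<beta>"
proof -
  obtain \<gamma>0 where g0: "hq = u + of_real \<rho> * cis \<gamma>0" using polar_rep assms by blast
  obtain \<gamma> where g: "cis \<gamma> = cis \<gamma>0" "\<alpha> \<le> \<gamma>" "\<gamma> < \<alpha> + 2*pi" using cis_norm_angle by blast
  have hw: "hq = u + of_real \<rho> * cis \<gamma>" using g0 g by simp
  have pos: "0 < 4 * \<rho>^2 * sin ((\<beta> - \<gamma>)/2) * sin ((\<gamma> - \<alpha>)/2) * sin ((\<beta> - \<alpha>)/2)"
    using o unfolding hw orient_circ .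
  have s2: "sin ((\<gamma> - \<alpha>)/2) \<ge> 0" using g by (intro sin_ge_zero) auto
  have s3: "sin ((\<beta> - \<alpha>)/2) \<ge> 0" using assms by (intro sin_ge_zero) auto
  have r2: "4 * \<rho>^2 > 0" using assms by simp
  have "sin ((\<gamma> - \<alpha>)/2) \<noteq> 0" using pos by auto
  then have s2': "sin ((\<gamma> - \<alpha>)/2) > 0" using s2 by auto
  have "sin ((\<beta> - \<alpha>)/2) \<noteq> 0" using pos by auto
  then have s3': "sin ((\<beta> - \<alpha>)/2) > 0" using s3 by auto
  have s: "sin ((\<beta> - \<gamma>)/2) > 0"
    using pos r2 s2' s3' by (smt (verit) mult_pos_pos mult_nonneg_nonpos mult_nonpos_nonneg zero_less_mult_iff)
  have "\<not> (\<beta> \<le> \<gamma>)"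
  proof
    assume "\<beta> \<le> \<gamma>"
    then have "sin ((\<gamma> - \<beta>)/2) \<ge> 0" using g assms by (intro sin_ge_zero) auto
    moreover have "sin ((\<beta> - \<gamma>)/2) = - sin ((\<gamma> - \<beta>)/2)"
      by (metis minus_diff_eq minus_divide_left sin_minus)
    ultimately show False using s by auto
  qed
  moreover have "\<gamma> \<noteq> \<alpha>" using s2' by auto
  ultimately have "\<alpha> < \<gamma>" "\<gamma> < \<beta>" using g by auto
  then show ?thesis using hw by blast
qed

lemma angles:
  fixes u hx hy hw hz :: complex and \<rho> :: real
  assumes "\<rho> > 0" "dist hx u = \<rho>" "dist hy u = \<rho>" "dist hw u = \<rho>" "dist hz u = \<rho>"
    and o: "orient hx hw hy > 0" "orient hx hz hy > 0"
  obtains \<alpha> \<beta> \<gamma> \<delta> where "hx = u + of_real \<rho> * cis \<alpha>" "hy = u + of_real \<rho> * cis \<beta>"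
    "hw = u + of_real \<rho> * cis \<gamma>" "hz = u + of_real \<rho> * cis \<delta>"
    "\<alpha> < \<gamma>" "\<gamma> < \<beta>" "\<alpha> < \<delta>" "\<delta> < \<beta>" "\<beta> < \<alpha> + 2*pi"
proof -
  obtain \<alpha> where a: "hx = u + of_real \<rho> * cis \<alpha>" using polar_rep assms by blast
  obtain \<beta>0 where b0: "hy = u + of_real \<rho> * cis \<beta>0" using polar_rep assms by blast
  obtain \<beta> where b: "cis \<beta> = cis \<beta>0" "\<alpha> \<le> \<beta>" "\<beta> < \<alpha> + 2*pi" using cis_norm_angle by blast
  have hy: "hy = u + of_real \<rho> * cis \<beta>" using b0 b by simp
  obtain \<gamma> where g: "hw = u + of_real \<rho> * cis \<gamma>" "\<alpha> < \<gamma>" "\<gamma> < \<beta>"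
    using angle_core[OF assms(1) assms(4) b(2) b(3)] o(1) a hy by blast
  obtain \<delta> where d: "hz = u + of_real \<rho> * cis \<delta>" "\<alpha> < \<delta>" "\<delta> < \<beta>"
    using angle_core[OF assms(1) assms(5) b(2) b(3)] o(2) a hy by blast
  show ?thesis by (rule that[OF a hy g(1) d(1) g(2) g(3) d(2) d(3) b(3)])
qed


definition pol :: "complex \<Rightarrow> real \<Rightarrow> real \<Rightarrow> complex" where
  "pol u r \<theta> = u + of_real r * cis \<theta>"

definition sect :: "complex \<Rightarrow> real \<Rightarrow> real \<Rightarrow> real \<Rightarrow> complex set" where
  "sect u \<rho> a b = (\<lambda>p. pol u (fst p) (snd p)) ` ({\<rho>..2*\<rho>} \<times> {a..b})"

lemma dist_pol: "r \<ge> 0 \<Longrightarrow> dist (pol u r \<theta>) u = r"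
  by (simp add: pol_def dist_norm norm_mult)

lemma pol_eq:
  assumes "r1 > 0" "r2 > 0" "pol u r1 t1 = pol u r2 t2"
  shows "r1 = r2 \<and> cis t1 = cis t2"
proof -
  have "dist (pol u r1 t1) u = dist (pol u r2 t2) u" using assms by simp
  moreover have "dist (pol u r1 t1) u = r1" using assms(1) by (simp add: dist_pol)
  moreover have "dist (pol u r2 t2) u = r2" using assms(2) by (simp add: dist_pol)
  ultimately have r: "r1 = r2" by simp
  then have "of_real r1 * cis t1 = of_real r1 * cis t2" using assms(3) by (simp add: pol_def)
  then have "cis t1 = cis t2" using assms(1) by simp
  with r show ?thesis by simp
qed

lemma sect_compact: "compact (sect u \<rho> a b)"
  unfolding sect_def pol_def
  by (intro compact_continuous_image compact_Times compact_Icc continuous_intros)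

lemma sect_connected: "connected (sect u \<rho> a b)"
  unfolding sect_def pol_def
  by (intro connected_continuous_image connected_Times connected_Icc continuous_intros)

lemma sect_mem: "\<rho> \<le> r \<Longrightarrow> r \<le> 2*\<rho> \<Longrightarrow> a \<le> \<theta> \<Longrightarrow> \<theta> \<le> b \<Longrightarrow> pol u r \<theta> \<in> sect u \<rho> a b"
  unfolding sect_def by (rule image_eqI[where x="(r,\<theta>)"]) auto

lemma sectE:
  assumes "p \<in> sect u \<rho> a b"
  obtains r \<theta> where "p = pol u r \<theta>" "\<rho> \<le> r" "r \<le> 2*\<rho>" "a \<le> \<theta>" "\<theta> \<le> b"
  using assms unfolding sect_def by auto

lemma sect_dist: "\<rho> \<ge> 0 \<Longrightarrow> p \<in> sect u \<rho> a b \<Longrightarrow> dist p u \<ge> \<rho>"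
  by (erule sectE) (simp add: dist_pol)

lemma sect_disj:
  assumes "\<rho> > 0" "b1 < a2" "b2 < a1 + 2*pi"
  shows "sect u \<rho> a1 b1 \<inter> sect u \<rho> a2 b2 = {}"
proof (rule ccontr)
  assume "sect u \<rho> a1 b1 \<inter> sect u \<rho> a2 b2 \<noteq> {}"
  then obtain p where p1: "p \<in> sect u \<rho> a1 b1" and p2: "p \<in> sect u \<rho> a2 b2" by blast
  obtain r1 t1 where 1: "p = pol u r1 t1" "\<rho> \<le> r1" "a1 \<le> t1" "t1 \<le> b1" using p1 by (rule sectE)
  obtain r2 t2 where 2: "p = pol u r2 t2" "\<rho> \<le> r2" "a2 \<le> t2" "t2 \<le> b2" using p2 by (rule sectE)
  have "cis t2 = cis t1" using pol_eq[of r2 r1 u t2 t1] 1 2 assms by auto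
  then show False by (rule cis_eq_range) (use 1 2 assms in auto)
qed

lemma sect_circ:
  assumes "\<rho> > 0" "p \<in> sect u \<rho> a b" "dist p u \<le> \<rho>"
  obtains \<theta> where "p = pol u \<rho> \<theta>" "a \<le> \<theta>" "\<theta> \<le> b"
proof -
  obtain r t where 1: "p = pol u r t" "\<rho> \<le> r" "a \<le> t" "t \<le> b" using assms(2) by (rule sectE)
  have "r = \<rho>" using dist_pol[of r u t] 1 assms by auto
  then show ?thesis using that 1 by blast
qed

lemma circ_ne:
  assumes "\<rho> > 0" "0 < t1 - t2" "t1 - t2 < 2*pi"
  shows "pol u \<rho> t1 \<noteq> pol u \<rho> t2"
  using pol_eq[of \<rho> \<rho> u t1 t2] cis_eq_range[of t1 t2] assms by auto


lemma arc_inj01: "arc g \<Longrightarrow> s \<in> {0..1} \<Longrightarrow> t \<in> {0..1} \<Longrightarrow> g s = g t \<Longrightarrow> s = t"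
  unfolding arc_def by (meson inj_onD)

lemma arc_cont: "arc g \<Longrightarrow> continuous_on {0..1} g"
  unfolding arc_def path_def by simp

lemma min6:
  fixes a b c d e f :: real
  assumes "0 < a" "0 < b" "0 < c" "0 < d" "0 < e" "0 < f"
  shows "0 < min (min (min a b) (min c d)) (min e f) / 2"
    "min (min (min a b) (min c d)) (min e f) / 2 < a"
    "min (min (min a b) (min c d)) (min e f) / 2 < b"
    "min (min (min a b) (min c d)) (min e f) / 2 < c"
    "min (min (min a b) (min c d)) (min e f) / 2 < d"
    "min (min (min a b) (min c d)) (min e f) / 2 < e"
    "min (min (min a b) (min c d)) (min e f) / 2 < f"
  using assms by (simp_all add: min_def)

lemma local_claim:
  fixes gx gy gw gz :: "real \<Rightarrow> complex" and u :: complex and R :: "complex set" and T :: real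
  assumes arcs: "arc gx" "arc gy" "arc gw" "arc gz"
    and st: "gx 0 = u" "gy 0 = u" "gw 0 = u" "gz 0 = u"
    and dxy: "gx`{0..1} \<inter> gy`{0..1} \<subseteq> {u}"
    and dxw: "gx`{0..1} \<inter> gw`{0..1} \<subseteq> {u}" and dxz: "gx`{0..1} \<inter> gz`{0..1} \<subseteq> {u}"
    and dyw: "gy`{0..1} \<inter> gw`{0..1} \<subseteq> {u}" and dyz: "gy`{0..1} \<inter> gz`{0..1} \<subseteq> {u}"
    and R: "compact R" "u \<notin> R" "R \<inter> gx`{0..1} \<subseteq> {gx 1}" "R \<inter> gy`{0..1} \<subseteq> {gy 1}"
    and T: "0 < T" "T \<le> 1"
    and rw: "\<exists>r0>0. \<forall>r. 0 < r \<and> r < r0 \<longrightarrow>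
        orient (gx (Inf {t\<in>{0..1}. dist (gx t) u = r})) (gw (Inf {t\<in>{0..1}. dist (gw t) u = r}))
               (gy (Inf {t\<in>{0..1}. dist (gy t) u = r})) > 0"
    and rz: "\<exists>r0>0. \<forall>r. 0 < r \<and> r < r0 \<longrightarrow>
        orient (gx (Inf {t\<in>{0..1}. dist (gx t) u = r})) (gz (Inf {t\<in>{0..1}. dist (gz t) u = r}))
               (gy (Inf {t\<in>{0..1}. dist (gy t) u = r})) > 0"
  shows "\<exists>\<tau>a \<tau>b. \<tau>a \<in> {0<..<T} \<and> \<tau>b \<in> {0<..1} \<and>
           connected_component (- (gx`{0..1} \<union> gy`{0..1} \<union> R)) (gw \<tau>a) (gz \<tau>b)"
proof -
  have nz: "\<And>g (t::real). arc g \<Longrightarrow> g 0 = u \<Longrightarrow> t \<in> {0<..1} \<Longrightarrow> dist (g t) u > 0"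
  proof -
    fix g :: "real \<Rightarrow> complex" and t :: real assume g: "arc g" "g 0 = u" "t \<in> {0<..1}"
    have "g t \<noteq> g 0" using arc_inj01[OF g(1), of t 0] g(3) by auto
    then show "dist (g t) u > 0" using g(2) by simp
  qed
  have d1: "dist (gx 1) u > 0" "dist (gy 1) u > 0" "dist (gz 1) u > 0" "dist (gw T) u > 0"
    using nz arcs st T by auto
  obtain r0w where r0w: "r0w > 0" "\<forall>r. 0 < r \<and> r < r0w \<longrightarrow>
        orient (gx (Inf {t\<in>{0..1}. dist (gx t) u = r})) (gw (Inf {t\<in>{0..1}. dist (gw t) u = r}))
               (gy (Inf {t\<in>{0..1}. dist (gy t) u = r})) > 0" using rw by blast
  obtain r0z where r0z: "r0z > 0" "\<forall>r. 0 < r \<and> r < r0z \<longrightarrow>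
        orient (gx (Inf {t\<in>{0..1}. dist (gx t) u = r})) (gz (Inf {t\<in>{0..1}. dist (gz t) u = r}))
               (gy (Inf {t\<in>{0..1}. dist (gy t) u = r})) > 0" using rz by blast
  define \<rho> where "\<rho> = min (min (min r0w r0z) (min (dist (gx 1) u) (dist (gy 1) u)))
                          (min (dist (gw T) u) (dist (gz 1) u)) / 2"
  have \<rho>: "\<rho> > 0" "\<rho> < r0w" "\<rho> < r0z" "\<rho> < dist (gx 1) u" "\<rho> < dist (gy 1) u"
     "\<rho> < dist (gw T) u" "\<rho> < dist (gz 1) u"
    unfolding \<rho>_def by (fact min6[OF r0w(1) r0z(1) d1(1) d1(2) d1(4) d1(3)])+
  define \<tau>x where "\<tau>x = Inf {t\<in>{0..1}. dist (gx t) u = \<rho>}"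
  define \<tau>y where "\<tau>y = Inf {t\<in>{0..1}. dist (gy t) u = \<rho>}"
  define \<tau>w where "\<tau>w = Inf {t\<in>{0..1}. dist (gw t) u = \<rho>}"
  define \<tau>z where "\<tau>z = Inf {t\<in>{0..1}. dist (gz t) u = \<rho>}"
  note hx = hit[OF arcs(1) st(1) \<rho>(1) _ \<rho>(4), folded \<tau>x_def, simplified]
  note hy = hit[OF arcs(2) st(2) \<rho>(1) _ \<rho>(5), folded \<tau>y_def, simplified]
  note hz = hit[OF arcs(4) st(4) \<rho>(1) _ \<rho>(7), folded \<tau>z_def, simplified]
  have Tin: "T \<in> {0..1}" using T by auto
  note hw = hit[OF arcs(3) st(3) \<rho>(1) Tin \<rho>(6), folded \<tau>w_def]
  have wT: "\<tau>w < T" using hw(4)[OF Tin \<rho>(6)] .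
  have ow: "orient (gx \<tau>x) (gw \<tau>w) (gy \<tau>y) > 0"
    using r0w(2) \<rho> unfolding \<tau>x_def \<tau>y_def \<tau>w_def by blast
  have oz: "orient (gx \<tau>x) (gz \<tau>z) (gy \<tau>y) > 0"
    using r0z(2) \<rho> unfolding \<tau>x_def \<tau>y_def \<tau>z_def by blast
  obtain \<alpha> \<beta> \<gamma> \<delta> where ang: "gx \<tau>x = u + of_real \<rho> * cis \<alpha>" "gy \<tau>y = u + of_real \<rho> * cis \<beta>"
    "gw \<tau>w = u + of_real \<rho> * cis \<gamma>" "gz \<tau>z = u + of_real \<rho> * cis \<delta>"
    "\<alpha> < \<gamma>" "\<gamma> < \<beta>" "\<alpha> < \<delta>" "\<delta> < \<beta>" "\<beta> < \<alpha> + 2*pi"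
    using angles[OF \<rho>(1) hx(2) hy(2) hw(2) hz(2) ow oz] by blast
  have px: "gx \<tau>x = pol u \<rho> \<alpha>" using ang by (simp add: pol_def)
  have "cis (\<beta> - 2*pi) = cis \<beta>" by (simp add: cis_divide[symmetric])
  then have py: "gy \<tau>y = pol u \<rho> (\<beta> - 2*pi)" using ang by (simp add: pol_def)
  have py': "gy \<tau>y = pol u \<rho> \<beta>" using ang by (simp add: pol_def)
  have pw: "gw \<tau>w = pol u \<rho> \<gamma>" using ang by (simp add: pol_def)
  have pz: "gz \<tau>z = pol u \<rho> \<delta>" using ang by (simp add: pol_def)
  define B where "B = sect u \<rho> (\<beta> - 2*pi) \<alpha>"
  define Rp where "Rp = sect u \<rho> (min \<gamma> \<delta>) (max \<gamma> \<delta>)"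
  have xB: "gx \<tau>x \<in> B" unfolding B_def px by (rule sect_mem) (use \<rho> ang in auto)
  have yB: "gy \<tau>y \<in> B" unfolding B_def py by (rule sect_mem) (use \<rho> ang in auto)
  have wR: "gw \<tau>w \<in> Rp" unfolding Rp_def pw by (rule sect_mem) (use \<rho> ang in auto)
  have zR: "gz \<tau>z \<in> Rp" unfolding Rp_def pz by (rule sect_mem) (use \<rho> ang in auto)
  have BR: "B \<inter> Rp = {}" unfolding B_def Rp_def by (rule sect_disj) (use \<rho> ang in auto)
  have radx: "\<And>t. t \<in> {0..\<tau>x} \<Longrightarrow> dist (gx t) u < \<rho> \<or> t = \<tau>x" using hx(3) by fastforce
  have rady: "\<And>t. t \<in> {0..\<tau>y} \<Longrightarrow> dist (gy t) u < \<rho> \<or> t = \<tau>y" using hy(3) by fastforce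
  have radw: "\<And>t. t \<in> {0..\<tau>w} \<Longrightarrow> dist (gw t) u < \<rho> \<or> t = \<tau>w" using hw(3) by fastforce
  have radz: "\<And>t. t \<in> {0..\<tau>z} \<Longrightarrow> dist (gz t) u < \<rho> \<or> t = \<tau>z" using hz(3) by fastforce
  have Bd: "\<And>p. p \<in> B \<Longrightarrow> dist p u \<ge> \<rho>" unfolding B_def using \<rho>(1) sect_dist by auto
  have Rd: "\<And>p. p \<in> Rp \<Longrightarrow> dist p u \<ge> \<rho>" unfolding Rp_def using \<rho>(1) sect_dist by auto
  have xnR: "gx \<tau>x \<notin> Rp"
  proof
    assume "gx \<tau>x \<in> Rp"
    then obtain \<theta> where th: "gx \<tau>x = pol u \<rho> \<theta>" "min \<gamma> \<delta> \<le> \<theta>" "\<theta> \<le> max \<gamma> \<delta>"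
      using sect_circ[OF \<rho>(1), of "gx \<tau>x" u "min \<gamma> \<delta>" "max \<gamma> \<delta>"] hx(2) unfolding Rp_def by auto
    have "pol u \<rho> \<theta> \<noteq> pol u \<rho> \<alpha>" by (rule circ_ne) (use \<rho> ang th in auto)
    then show False using th px by simp
  qed
  have ynR: "gy \<tau>y \<notin> Rp"
  proof
    assume "gy \<tau>y \<in> Rp"
    then obtain \<theta> where th: "gy \<tau>y = pol u \<rho> \<theta>" "min \<gamma> \<delta> \<le> \<theta>" "\<theta> \<le> max \<gamma> \<delta>"
      using sect_circ[OF \<rho>(1), of "gy \<tau>y" u "min \<gamma> \<delta>" "max \<gamma> \<delta>"] hy(2) unfolding Rp_def by auto
    have "pol u \<rho> \<beta> \<noteq> pol u \<rho> \<theta>" by (rule circ_ne) (use \<rho> ang th in auto)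
    then show False using th py' by simp
  qed
  have wnB: "gw \<tau>w \<notin> B"
  proof
    assume "gw \<tau>w \<in> B"
    then obtain \<theta> where th: "gw \<tau>w = pol u \<rho> \<theta>" "\<beta> - 2*pi \<le> \<theta>" "\<theta> \<le> \<alpha>"
      using sect_circ[OF \<rho>(1), of "gw \<tau>w" u "\<beta> - 2*pi" \<alpha>] hw(2) unfolding B_def by auto
    have "pol u \<rho> \<gamma> \<noteq> pol u \<rho> \<theta>" by (rule circ_ne) (use \<rho> ang th in auto)
    then show False using th pw by simp
  qed
  have znB: "gz \<tau>z \<notin> B"
  proof
    assume "gz \<tau>z \<in> B"
    then obtain \<theta> where th: "gz \<tau>z = pol u \<rho> \<theta>" "\<beta> - 2*pi \<le> \<theta>" "\<theta> \<le> \<alpha>"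
      using sect_circ[OF \<rho>(1), of "gz \<tau>z" u "\<beta> - 2*pi" \<alpha>] hz(2) unfolding B_def by auto
    have "pol u \<rho> \<delta> \<noteq> pol u \<rho> \<theta>" by (rule circ_ne) (use \<rho> ang th in auto)
    then show False using th pz by simp
  qed
  define \<sigma>x where "\<sigma>x = gx ` {0..\<tau>x}"
  define \<sigma>y where "\<sigma>y = gy ` {0..\<tau>y}"
  define K where "K = \<sigma>x \<union> \<sigma>y \<union> B"
  define Fp where "Fp = gx ` {\<tau>x..1} \<union> R \<union> gy ` {\<tau>y..1}"
  define Tt where "Tt = Fp \<union> B"
  have sxR: "\<sigma>x \<inter> Rp = {}"
  proof (rule ccontr)
    assume "\<sigma>x \<inter> Rp \<noteq> {}"
    then obtain t where t: "t \<in> {0..\<tau>x}" "gx t \<in> Rp" unfolding \<sigma>x_def by blast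
    have "dist (gx t) u \<ge> \<rho>" using Rd t by blast
    then have "t = \<tau>x" using radx[OF t(1)] by auto
    then show False using t xnR by simp
  qed
  have syR: "\<sigma>y \<inter> Rp = {}"
  proof (rule ccontr)
    assume "\<sigma>y \<inter> Rp \<noteq> {}"
    then obtain t where t: "t \<in> {0..\<tau>y}" "gy t \<in> Rp" unfolding \<sigma>y_def by blast
    have "dist (gy t) u \<ge> \<rho>" using Rd t by blast
    then have "t = \<tau>y" using rady[OF t(1)] by auto
    then show False using t ynR by simp
  qed
  have cx: "continuous_on {0..1} gx" "continuous_on {0..1} gy" "continuous_on {0..1} gw" "continuous_on {0..1} gz"
    using arcs arc_cont by auto
  have cpt: "\<And>(g::real\<Rightarrow>complex) a b. continuous_on {0..1} g \<Longrightarrow> 0 \<le> a \<Longrightarrow> b \<le> 1 \<Longrightarrow> compact (g ` {a..b})"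
  proof -
    fix g :: "real \<Rightarrow> complex" and a b :: real assume "continuous_on {0..1} g" "0 \<le> a" "b \<le> 1"
    then have "continuous_on {a..b} g" using continuous_on_subset[of "{0..1}" g "{a..b}"] by auto
    then show "compact (g ` {a..b})" by (rule compact_continuous_image) simp
  qed
  have cnn: "\<And>(g::real\<Rightarrow>complex) a b. continuous_on {0..1} g \<Longrightarrow> 0 \<le> a \<Longrightarrow> b \<le> 1 \<Longrightarrow> connected (g ` {a..b})"
  proof -
    fix g :: "real \<Rightarrow> complex" and a b :: real assume "continuous_on {0..1} g" "0 \<le> a" "b \<le> 1"
    then have "continuous_on {a..b} g" using continuous_on_subset[of "{0..1}" g "{a..b}"] by auto
    then show "connected (g ` {a..b})" by (rule connected_continuous_image) simp
  qed
  have injx: "\<And>s t. s \<in> {0..1} \<Longrightarrow> t \<in> {0..1} \<Longrightarrow> gx s = gx t \<Longrightarrow> s = t" using arc_inj01 arcs by blast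
  have injy: "\<And>s t. s \<in> {0..1} \<Longrightarrow> t \<in> {0..1} \<Longrightarrow> gy s = gy t \<Longrightarrow> s = t" using arc_inj01 arcs by blast
  have injw: "\<And>s t. s \<in> {0..1} \<Longrightarrow> t \<in> {0..1} \<Longrightarrow> gw s = gw t \<Longrightarrow> s = t" using arc_inj01 arcs by blast
  have injz: "\<And>s t. s \<in> {0..1} \<Longrightarrow> t \<in> {0..1} \<Longrightarrow> gz s = gz t \<Longrightarrow> s = t" using arc_inj01 arcs by blast
  have Kc: "compact K"
    unfolding K_def \<sigma>x_def \<sigma>y_def B_def
    by (intro compact_Un cpt cx sect_compact) (use hx hy in auto)
  have Ttc: "closed Tt"
    unfolding Tt_def Fp_def B_def
    by (intro compact_imp_closed compact_Un cpt cx sect_compact R(1)) (use hx hy in auto)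
  have sxF: "\<sigma>x \<inter> Fp \<subseteq> {gx \<tau>x}"
  proof
    fix p assume p: "p \<in> \<sigma>x \<inter> Fp"
    then obtain s where s: "s \<in> {0..\<tau>x}" "p = gx s" unfolding \<sigma>x_def by auto
    have s01: "s \<in> {0..1}" using s hx(1) by auto
    have "p \<in> gx`{\<tau>x..1} \<or> p \<in> R \<or> p \<in> gy`{\<tau>y..1}" using p unfolding Fp_def by blast
    then show "p \<in> {gx \<tau>x}"
    proof (elim disjE)
      assume "p \<in> gx`{\<tau>x..1}"
      then obtain t where t: "t \<in> {\<tau>x..1}" "p = gx t" by auto
      have "s = t" using injx[of s t] s t s01 hx(1) by auto
      then show ?thesis using s t by auto
    next
      assume "p \<in> R"
      then have "p = gx 1" using R(3) s01 s by blast
      then have "s = 1" using injx[of s 1] s01 s by auto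
      then show ?thesis using s hx(1) by auto
    next
      assume "p \<in> gy`{\<tau>y..1}"
      then obtain t where t: "t \<in> {\<tau>y..1}" "p = gy t" by auto
      have "t \<in> {0..1}" using t hy(1) by auto
      then have "p = u" using dxy s01 s t by blast
      then have "gy t = gy 0" using t st by simp
      then have "t = 0" using injy[of t 0] \<open>t \<in> {0..1}\<close> by auto
      then show ?thesis using t hy(1) by auto
    qed
  qed
  have syF: "\<sigma>y \<inter> Fp \<subseteq> {gy \<tau>y}"
  proof
    fix p assume p: "p \<in> \<sigma>y \<inter> Fp"
    then obtain s where s: "s \<in> {0..\<tau>y}" "p = gy s" unfolding \<sigma>y_def by auto
    have s01: "s \<in> {0..1}" using s hy(1) by auto
    have "p \<in> gx`{\<tau>x..1} \<or> p \<in> R \<or> p \<in> gy`{\<tau>y..1}" using p unfolding Fp_def by blast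
    then show "p \<in> {gy \<tau>y}"
    proof (elim disjE)
      assume "p \<in> gy`{\<tau>y..1}"
      then obtain t where t: "t \<in> {\<tau>y..1}" "p = gy t" by auto
      have "s = t" using injy[of s t] s t s01 hy(1) by auto
      then show ?thesis using s t by auto
    next
      assume "p \<in> R"
      then have "p = gy 1" using R(4) s01 s by blast
      then have "s = 1" using injy[of s 1] s01 s by auto
      then show ?thesis using s hy(1) by auto
    next
      assume "p \<in> gx`{\<tau>x..1}"
      then obtain t where t: "t \<in> {\<tau>x..1}" "p = gx t" by auto
      have "t \<in> {0..1}" using t hx(1) by auto
      then have "p = u" using dxy s01 s t by blast
      then have "gx t = gx 0" using t st by simp
      then have "t = 0" using injx[of t 0] \<open>t \<in> {0..1}\<close> by auto
      then show ?thesis using t hx(1) by auto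
    qed
  qed
  have KT: "K \<inter> Tt = B"
    using sxF syF xB yB unfolding K_def Tt_def by blast
  have Tri: "gx`{0..1} \<union> gy`{0..1} \<union> R \<subseteq> K \<union> Tt"
  proof -
    have "gx`{0..1} \<subseteq> \<sigma>x \<union> gx`{\<tau>x..1}" unfolding \<sigma>x_def by (auto simp: image_iff) (metis atLeastAtMost_iff linear)
    moreover have "gy`{0..1} \<subseteq> \<sigma>y \<union> gy`{\<tau>y..1}" unfolding \<sigma>y_def by (auto simp: image_iff) (metis atLeastAtMost_iff linear)
    ultimately show ?thesis unfolding K_def Tt_def Fp_def by blast
  qed
  have uT: "u \<notin> Tt"
  proof
    assume "u \<in> Tt"
    then consider "u \<in> B" | "u \<in> gx`{\<tau>x..1}" | "u \<in> R" | "u \<in> gy`{\<tau>y..1}"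
      unfolding Tt_def Fp_def by blast
    then show False
    proof cases
      case 1 then show False using Bd \<rho>(1) by fastforce
    next
      case 2
      then obtain t where t: "t \<in> {\<tau>x..1}" "gx t = gx 0" using st by auto
      then show False using injx[of t 0] hx(1) by auto
    next
      case 3 then show False using R(2) by simp
    next
      case 4
      then obtain t where t: "t \<in> {\<tau>y..1}" "gy t = gy 0" using st by auto
      then show False using injy[of t 0] hy(1) by auto
    qed
  qed
  obtain \<eta> where \<eta>: "\<eta> > 0" "\<forall>p\<in>Tt. \<eta> \<le> dist u p"
    using separate_point_closed[OF Ttc uT] by blast
  define \<eta>a where "\<eta>a = min \<eta> \<rho> / 2"
  have \<eta>a: "0 < \<eta>a" "\<eta>a < \<eta>" "\<eta>a < \<rho>" using \<eta> \<rho> unfolding \<eta>a_def by auto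
  have small: "\<And>(g::real\<Rightarrow>complex) \<tau>. continuous_on {0..1} g \<Longrightarrow> g 0 = u \<Longrightarrow> \<tau> \<in> {0<..<1} \<Longrightarrow> dist (g \<tau>) u = \<rho> \<Longrightarrow>
      \<exists>\<epsilon>. 0 < \<epsilon> \<and> \<epsilon> < \<tau> \<and> dist (g \<epsilon>) u = \<eta>a"
  proof -
    fix g :: "real \<Rightarrow> complex" and \<tau> :: real
    assume g: "continuous_on {0..1} g" "g 0 = u" "\<tau> \<in> {0<..<1}" "dist (g \<tau>) u = \<rho>"
    have "continuous_on {0..\<tau>} (\<lambda>t. dist (g t) u)"
      by (intro continuous_intros continuous_on_subset[OF g(1)]) (use g(3) in auto)
    then obtain \<epsilon> where e: "0 \<le> \<epsilon>" "\<epsilon> \<le> \<tau>" "dist (g \<epsilon>) u = \<eta>a"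
      using IVT'[of "\<lambda>t. dist (g t) u" 0 \<eta>a \<tau>] g \<eta>a by auto
    have "\<epsilon> \<noteq> 0" using e g \<eta>a by auto
    moreover have "\<epsilon> \<noteq> \<tau>" using e g \<eta>a by auto
    ultimately have "0 < \<epsilon> \<and> \<epsilon> < \<tau> \<and> dist (g \<epsilon>) u = \<eta>a" using e by auto
    then show "\<exists>\<epsilon>. 0 < \<epsilon> \<and> \<epsilon> < \<tau> \<and> dist (g \<epsilon>) u = \<eta>a" by blast
  qed
  obtain \<epsilon>a where ea: "0 < \<epsilon>a" "\<epsilon>a < \<tau>w" "dist (gw \<epsilon>a) u = \<eta>a"
    using small[OF cx(3) st(3) hw(1) hw(2)] by blast
  obtain \<epsilon>b where eb: "0 < \<epsilon>b" "\<epsilon>b < \<tau>z" "dist (gz \<epsilon>b) u = \<eta>a"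
    using small[of gz \<tau>z] cx(4) st(4) hz(1) hz(2) by auto
  have cc1: "connected_component (- Tt) (gw \<epsilon>a) (gz \<epsilon>b)"
  proof (rule connected_componentI[of "ball u \<eta>"])
    show "connected (ball u \<eta>)" by simp
    show "ball u \<eta> \<subseteq> - Tt" using \<eta>(2) by force
    show "gw \<epsilon>a \<in> ball u \<eta>" using ea \<eta>a by (simp add: dist_commute)
    show "gz \<epsilon>b \<in> ball u \<eta>" using eb \<eta>a by (simp add: dist_commute)
  qed
  have wK: "gw ` {\<epsilon>a..\<tau>w} \<inter> K = {}"
  proof (rule ccontr)
    assume "gw ` {\<epsilon>a..\<tau>w} \<inter> K \<noteq> {}"
    then obtain t where t: "t \<in> {\<epsilon>a..\<tau>w}" "gw t \<in> K" by blast
    have t01: "t \<in> {0..1}" using t ea hw(1) by auto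
    have tn: "gw t \<noteq> u"
    proof
      assume "gw t = u" then have "gw t = gw 0" using st by simp
      then have "t = 0" using injw[of t 0] t01 by auto
      then show False using t ea by auto
    qed
    consider "gw t \<in> \<sigma>x" | "gw t \<in> \<sigma>y" | "gw t \<in> B" using t unfolding K_def by blast
    then show False
    proof cases
      case 1
      then have "gw t \<in> gx`{0..1}" unfolding \<sigma>x_def using hx(1) by auto
      then show False using dxw tn t01 by blast
    next
      case 2
      then have "gw t \<in> gy`{0..1}" unfolding \<sigma>y_def using hy(1) by auto
      then show False using dyw tn t01 by blast
    next
      case 3
      then have "dist (gw t) u \<ge> \<rho>" using Bd by blast
      then have "t = \<tau>w" using radw[of t] t ea by auto
      then show False using 3 wnB by simp
    qed
  qed
  have zK: "gz ` {\<epsilon>b..\<tau>z} \<inter> K = {}"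
  proof (rule ccontr)
    assume "gz ` {\<epsilon>b..\<tau>z} \<inter> K \<noteq> {}"
    then obtain t where t: "t \<in> {\<epsilon>b..\<tau>z}" "gz t \<in> K" by blast
    have t01: "t \<in> {0..1}" using t eb hz(1) by auto
    have tn: "gz t \<noteq> u"
    proof
      assume "gz t = u" then have "gz t = gz 0" using st by simp
      then have "t = 0" using injz[of t 0] t01 by auto
      then show False using t eb by auto
    qed
    consider "gz t \<in> \<sigma>x" | "gz t \<in> \<sigma>y" | "gz t \<in> B" using t unfolding K_def by blast
    then show False
    proof cases
      case 1
      then have "gz t \<in> gx`{0..1}" unfolding \<sigma>x_def using hx(1) by auto
      then show False using dxz tn t01 by blast
    next
      case 2
      then have "gz t \<in> gy`{0..1}" unfolding \<sigma>y_def using hy(1) by auto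
      then show False using dyz tn t01 by blast
    next
      case 3
      then have "dist (gz t) u \<ge> \<rho>" using Bd by blast
      then have "t = \<tau>z" using radz[of t] t eb by auto
      then show False using 3 znB by simp
    qed
  qed
  have RK: "Rp \<inter> K = {}" using sxR syR BR unfolding K_def by blast
  define \<Gamma> where "\<Gamma> = gw ` {\<epsilon>a..\<tau>w} \<union> Rp \<union> gz ` {\<epsilon>b..\<tau>z}"
  have \<Gamma>c: "connected \<Gamma>"
  proof -
    have c1: "connected (gw ` {\<epsilon>a..\<tau>w})" by (rule cnn[OF cx(3)]) (use ea hw(1) in auto)
    have c2: "connected Rp" unfolding Rp_def by (rule sect_connected)
    have c3: "connected (gz ` {\<epsilon>b..\<tau>z})" by (rule cnn[OF cx(4)]) (use eb hz(1) in auto)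
    have "gw \<tau>w \<in> gw ` {\<epsilon>a..\<tau>w} \<inter> Rp" using wR ea by auto
    then have c12: "connected (gw ` {\<epsilon>a..\<tau>w} \<union> Rp)" using connected_Un[OF c1 c2] by blast
    have "gz \<tau>z \<in> (gw ` {\<epsilon>a..\<tau>w} \<union> Rp) \<inter> gz ` {\<epsilon>b..\<tau>z}" using zR eb by auto
    then show ?thesis unfolding \<Gamma>_def using connected_Un[OF c12 c3] by blast
  qed
  have cc2: "connected_component (- K) (gw \<epsilon>a) (gz \<epsilon>b)"
  proof (rule connected_componentI[OF \<Gamma>c])
    show "\<Gamma> \<subseteq> - K" using wK zK RK unfolding \<Gamma>_def by blast
    show "gw \<epsilon>a \<in> \<Gamma>" unfolding \<Gamma>_def using ea by auto
    show "gz \<epsilon>b \<in> \<Gamma>" unfolding \<Gamma>_def using eb by auto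
  qed
  have KTc: "connected (K \<inter> Tt)" unfolding KT B_def by (rule sect_connected)
  have "connected_component (- (K \<union> Tt)) (gw \<epsilon>a) (gz \<epsilon>b)"
    by (rule Janiszewski[OF Kc Ttc KTc cc2 cc1])
  then have "connected_component (- (gx`{0..1} \<union> gy`{0..1} \<union> R)) (gw \<epsilon>a) (gz \<epsilon>b)"
    by (rule connected_component_of_subset) (use Tri in blast)
  moreover have "\<epsilon>a \<in> {0<..<T}" using ea wT by auto
  moreover have "\<epsilon>b \<in> {0<..1}" using eb hz(1) by auto
  ultimately show ?thesis by blast
qed


context op1 begin

lemma kc_conn:
  assumes kc: "k_connected V E 4" and X: "X \<subseteq> V" "card X < 4"
  shows "graph_connected (V - X) E"
  using kc X unfolding k_connected_def by blast

lemma degree: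
  assumes kc: "k_connected V E 4" and v: "v \<in> V" and A: "finite A" "card A \<le> 3"
  shows "\<exists>v'. E v v' \<and> v' \<notin> A"
proof (rule ccontr)
  assume "\<not> (\<exists>v'. E v v' \<and> v' \<notin> A)"
  then have N: "\<And>v'. E v v' \<Longrightarrow> v' \<in> A" by blast
  define X where "X = (A \<inter> V) - {v}"
  have XV: "X \<subseteq> V" unfolding X_def by auto
  have fX: "finite X" unfolding X_def using A by auto
  have "card X \<le> card A" unfolding X_def by (rule card_mono[OF A(1)]) auto
  then have cX: "card X < 4" using A by simp
  have gc: "graph_connected (V - X) E" by (rule kc_conn[OF kc XV cX])
  have "card V > 4" using kc by (simp add: k_connected_def)
  have fV: "finite V" by (rule finV)
  have "card (V - X) = card V - card X" using card_Diff_subset[OF fX XV] .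
  then have "card (V - X) \<ge> 2" using \<open>card V > 4\<close> cX by simp
  moreover have "v \<in> V - X" using v unfolding X_def by auto
  ultimately obtain b where b: "b \<in> V - X" "b \<noteq> v"
  proof -
    assume *: "\<And>b. b \<in> V - X \<Longrightarrow> b \<noteq> v \<Longrightarrow> thesis"
    show thesis
    proof (rule ccontr)
      assume "\<not> thesis"
      then have "V - X \<subseteq> {v}" using * by blast
      then have "card (V - X) \<le> 1" using card_mono[of "{v}" "V - X"] by simp
      then show False using \<open>card (V - X) \<ge> 2\<close> by simp
    qed
  qed
  have "(\<lambda>x y. E x y \<and> x \<in> V - X \<and> y \<in> V - X)\<^sup>*\<^sup>* v b"
    using gc \<open>v \<in> V - X\<close> b(1) unfolding graph_connected_def by blast
  then show False
  proof (cases rule: converse_rtranclpE)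
    case base then show False using b by simp
  next
    case (step y)
    then have "E v y" "y \<in> V - X" by auto
    moreover have "y \<noteq> v" using \<open>E v y\<close> E_V by blast
    moreover have "y \<in> V" using \<open>E v y\<close> E_V by blast
    ultimately show False using N unfolding X_def by blast
  qed
qed

lemma sep:
  assumes kc: "k_connected V E 4" and X: "X \<subseteq> V" "card X < 4"
    and ab: "a \<in> V - X" "b \<in> V - X"
    and ed: "\<And>p q. E p q \<Longrightarrow> p \<in> V - X \<Longrightarrow> q \<in> V - X \<Longrightarrow> path_image (D p q) \<inter> J = {}"
    and aJ: "pos a \<notin> J"
  shows "connected_component (- J) (pos a) (pos b)"
proof -
  have "(\<lambda>x y. E x y \<and> x \<in> V - X \<and> y \<in> V - X)\<^sup>*\<^sup>* a b"
    using kc_conn[OF kc X] ab unfolding graph_connected_def by blast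
  then show ?thesis
  proof (induction rule: rtranclp_induct)
    case base then show ?case using aJ by simp
  next
    case (step y z)
    then have e: "E y z" "y \<in> V - X" "z \<in> V - X" by auto
    have "connected_component (- J) (pos y) (pos z)"
    proof (rule connected_componentI[of "path_image (D y z)"])
      show "connected (path_image (D y z))" using E_arc[OF e(1)] by (simp add: arc_imp_path connected_path_image)
      show "path_image (D y z) \<subseteq> - J" using ed[OF e] by blast
      show "pos y \<in> path_image (D y z)" using E_start[OF e(1)] pathstart_in_path_image by metis
      show "pos z \<in> path_image (D y z)" using E_fin[OF e(1)] pathfinish_in_path_image by metis
    qed
    then show ?case using step.IH connected_component_trans by blast
  qed
qed

end


context op1 begin

lemma I_mem: "t \<in> {0<..<1} \<Longrightarrow> D a b t \<in> I a b" by (simp add: I_def)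

lemma EA:
  assumes e: "E u w" "E x y" "E u y" "E a b" and eux: "E u x"
    and st: "s \<in> {0<..<1}" "t \<in> {0<..<1}" "D x y s = D u w t"
    and ab: "a \<noteq> u" "b \<noteq> u" "a \<noteq> y" "b \<noteq> y"
    and nc: "I a b \<inter> I u y = {}"
  shows "path_image (D a b) \<inter> (D u w ` {0..t} \<union> D x y ` {s..1} \<union> path_image (D u y)) = {}"
proof -
  have uxy: "u \<noteq> x" "u \<noteq> y" using E_V[OF eux] E_V[OF e(3)] by simp_all
  have cr: "I x y \<inter> I u w \<noteq> {}" using st I_mem[of s x y] I_mem[of t u w] by auto
  have 1: "path_image (D a b) \<inter> path_image (D u y) = {}"
  proof -
    have "path_image (D a b) \<inter> path_image (D u y) = pos ` ({a,b} \<inter> {u,y})"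
      by (rule img_meet[OF e(4) e(3) nc])
    also have "{a,b} \<inter> {u,y} = {}" using ab by auto
    finally show ?thesis by simp
  qed
  have 2: "path_image (D a b) \<inter> D x y ` {s..1} = {}"
  proof -
    have d: "I a b \<inter> I x y = {}"
    proof (rule ccontr)
      assume "I a b \<inter> I x y \<noteq> {}"
      then have "I x y \<inter> I a b \<noteq> {}" by blast
      have ne1: "{x,y} \<noteq> {u,w}" using uxy by auto
      have ne2: "{x,y} \<noteq> {a,b}" using ab by auto
      have "{u,w} = {a,b}" by (rule once_edge[OF e(2) e(1) e(4) ne1 ne2 cr \<open>I x y \<inter> I a b \<noteq> {}\<close>])
      then show False using ab by auto
    qed
    have m: "path_image (D a b) \<inter> path_image (D x y) = pos ` ({a,b} \<inter> {x,y})"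
      by (rule img_meet[OF e(4) e(2) d])
    show ?thesis
    proof (rule ccontr)
      assume "path_image (D a b) \<inter> D x y ` {s..1} \<noteq> {}"
      then obtain r where r: "r \<in> {s..1}" "D x y r \<in> path_image (D a b)" by blast
      have "D x y r \<in> path_image (D x y)" using r st by (auto simp: path_image_def)
      then have "D x y r \<in> pos ` ({a,b} \<inter> {x,y})" using m r by blast
      then have "D x y r = pos x" using ab by auto
      then have "D x y r = D x y 0" using E_0[OF e(2)] by simp
      then have "r = 0" using E_injD[OF e(2), of r 0] r st by auto
      then show False using r st by auto
    qed
  qed
  have 3: "path_image (D a b) \<inter> D u w ` {0..t} = {}"
  proof -
    have d: "I a b \<inter> I u w = {}"
    proof (rule ccontr)
      assume "I a b \<inter> I u w \<noteq> {}"
      then have "I u w \<inter> I a b \<noteq> {}" by blast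
      have cr': "I u w \<inter> I x y \<noteq> {}" using cr by blast
      have ne1: "{u,w} \<noteq> {x,y}" using uxy by auto
      have ne2: "{u,w} \<noteq> {a,b}" using ab by auto
      have "{x,y} = {a,b}" by (rule once_edge[OF e(1) e(2) e(4) ne1 ne2 cr' \<open>I u w \<inter> I a b \<noteq> {}\<close>])
      then show False using ab by auto
    qed
    have m: "path_image (D a b) \<inter> path_image (D u w) = pos ` ({a,b} \<inter> {u,w})"
      by (rule img_meet[OF e(4) e(1) d])
    show ?thesis
    proof (rule ccontr)
      assume "path_image (D a b) \<inter> D u w ` {0..t} \<noteq> {}"
      then obtain r where r: "r \<in> {0..t}" "D u w r \<in> path_image (D a b)" by blast
      have "D u w r \<in> path_image (D u w)" using r st by (auto simp: path_image_def)
      then have "D u w r \<in> pos ` ({a,b} \<inter> {u,w})" using m r by blast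
      then have "D u w r = pos w" using ab by auto
      then have "D u w r = D u w 1" using E_1[OF e(1)] by simp
      then have "r = 1" using E_injD[OF e(1), of r 1] r st by auto
      then show False using r st by auto
    qed
  qed
  show ?thesis using 1 2 3 by blast
qed

lemma card3: "card {a, b, c} \<le> 3"
  by (simp add: card_insert_if)

lemma sepF:
  assumes kc: "k_connected V E 4"
    and e: "E u x" "E u y" "E x y" "E u w" "E u z"
    and ne: "x \<noteq> w" "z \<noteq> w" "z \<noteq> x" "z \<noteq> y"
    and st: "s \<in> {0<..<1}" "t \<in> {0<..<1}" "D x y s = D u w t"
    and nc: "\<not> connected_component (- (D u w ` {0..t} \<union> D x y ` {s..1} \<union> path_image (D u y))) (pos z) (pos x)"
  shows False
proof -
  define J where "J = D u w ` {0..t} \<union> D x y ` {s..1} \<union> path_image (D u y)"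
  have V: "u \<in> V" "x \<in> V" "y \<in> V" "w \<in> V" "z \<in> V" using E_V[OF e(1)] E_V[OF e(2)] E_V[OF e(4)] E_V[OF e(5)] by auto
  have nu: "x \<noteq> u" "y \<noteq> u" "z \<noteq> u" "x \<noteq> y" using E_V[OF e(1)] E_V[OF e(2)] E_V[OF e(5)] E_V[OF e(3)] by auto
  have ptJ: "\<And>v. v \<in> V \<Longrightarrow> v \<noteq> u \<Longrightarrow> v \<noteq> w \<Longrightarrow> v \<noteq> y \<Longrightarrow> v \<noteq> x \<Longrightarrow> pos v \<notin> J"
  proof -
    fix v assume v: "v \<in> V" "v \<noteq> u" "v \<noteq> w" "v \<noteq> y" "v \<noteq> x"
    have "pos v \<notin> path_image (D u w)" using vert_on_img[OF e(4) v(1)] v by auto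
    moreover have "pos v \<notin> path_image (D x y)" using vert_on_img[OF e(3) v(1)] v by auto
    moreover have "pos v \<notin> path_image (D u y)" using vert_on_img[OF e(2) v(1)] v by auto
    moreover have "D u w ` {0..t} \<subseteq> path_image (D u w)" using st by (auto simp: path_image_def)
    moreover have "D x y ` {s..1} \<subseteq> path_image (D x y)" using st by (auto simp: path_image_def)
    ultimately show "pos v \<notin> J" unfolding J_def by blast
  qed
  have zJ: "pos z \<notin> J" using ptJ[OF V(5)] ne nu by auto
  have xJ: "pos x \<notin> J"
  proof -
    have "pos x \<notin> path_image (D u w)" using vert_on_img[OF e(4) V(2)] ne nu by auto
    moreover have "pos x \<notin> path_image (D u y)" using vert_on_img[OF e(2) V(2)] nu by auto
    moreover have "pos x \<notin> D x y ` {s..1}"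
    proof
      assume "pos x \<in> D x y ` {s..1}"
      then obtain r where r: "r \<in> {s..1}" "D x y r = pos x" by auto
      then have "D x y r = D x y 0" using E_0[OF e(3)] by simp
      then have "r = 0" using E_injD[OF e(3), of r 0] r st by auto
      then show False using r st by auto
    qed
    moreover have "D u w ` {0..t} \<subseteq> path_image (D u w)" using st by (auto simp: path_image_def)
    ultimately show ?thesis unfolding J_def by blast
  qed
  have EA': "\<And>a b. E a b \<Longrightarrow> a \<noteq> u \<Longrightarrow> b \<noteq> u \<Longrightarrow> a \<noteq> y \<Longrightarrow> b \<noteq> y \<Longrightarrow> I a b \<inter> I u y = {} \<Longrightarrow>
      path_image (D a b) \<inter> J = {}"
    unfolding J_def by (rule EA[OF e(4) e(3) e(2) _ e(1) st]) auto
  have nc': "\<not> connected_component (- J) (pos z) (pos x)" using nc unfolding J_def .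
  show False
  proof (cases "\<exists>p q. E p q \<and> {p,q} \<noteq> {u,y} \<and> I p q \<inter> I u y \<noteq> {}")
    case False
    define X where "X = {u, y}"
    have X: "X \<subseteq> V" "card X < 4" unfolding X_def using V by (auto simp: card_insert_if)
    have ed: "\<And>p q. E p q \<Longrightarrow> p \<in> V - X \<Longrightarrow> q \<in> V - X \<Longrightarrow> path_image (D p q) \<inter> J = {}"
    proof -
      fix p q assume pq: "E p q" "p \<in> V - X" "q \<in> V - X"
      then have "p \<noteq> u" "q \<noteq> u" "p \<noteq> y" "q \<noteq> y" unfolding X_def by auto
      moreover have "{p,q} \<noteq> {u,y}" using \<open>p \<noteq> u\<close> \<open>p \<noteq> y\<close> by auto
      ultimately show "path_image (D p q) \<inter> J = {}" using EA'[OF pq(1)] False pq(1) by blast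
    qed
    have "connected_component (- J) (pos z) (pos x)"
      by (rule sep[OF kc X _ _ ed zJ]) (use V ne nu in \<open>auto simp: X_def\<close>)
    then show False using nc' by simp
  next
    case True
    then obtain p q where pq: "E p q" "{p,q} \<noteq> {u,y}" "I p q \<inter> I u y \<noteq> {}" by blast
    have pqV: "p \<in> V" "q \<in> V" "p \<noteq> q" using E_V[OF pq(1)] by auto
    have uniq: "\<And>a b. E a b \<Longrightarrow> {a,b} \<noteq> {u,y} \<Longrightarrow> I a b \<inter> I u y \<noteq> {} \<Longrightarrow> {a,b} = {p,q}"
    proof -
      fix a b assume ab: "E a b" "{a,b} \<noteq> {u,y}" "I a b \<inter> I u y \<noteq> {}"
      have "{p,q} = {a,b}"
        by (rule once_edge[OF e(2) pq(1) ab(1)]) (use pq ab in auto)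
      then show "{a,b} = {p,q}" by simp
    qed
    have gen: "\<And>X. X \<subseteq> V \<Longrightarrow> card X < 4 \<Longrightarrow> u \<in> X \<Longrightarrow> y \<in> X \<Longrightarrow> (p \<in> X \<or> q \<in> X) \<Longrightarrow>
        (\<And>a b. E a b \<Longrightarrow> a \<in> V - X \<Longrightarrow> b \<in> V - X \<Longrightarrow> path_image (D a b) \<inter> J = {})"
    proof -
      fix X a b assume X: "X \<subseteq> V" "card X < 4" "u \<in> X" "y \<in> X" "p \<in> X \<or> q \<in> X"
        and ab: "E a b" "a \<in> V - X" "b \<in> V - X"
      have abn: "a \<noteq> u" "b \<noteq> u" "a \<noteq> y" "b \<noteq> y" using X ab by auto
      have "{a,b} \<noteq> {u,y}" using abn by auto
      moreover have "{a,b} \<noteq> {p,q}" using X ab by auto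
      ultimately have "I a b \<inter> I u y = {}" using uniq[OF ab(1)] by blast
      then show "path_image (D a b) \<inter> J = {}" using EA'[OF ab(1) abn] by blast
    qed
    show False
    proof (cases "p \<noteq> x \<and> p \<noteq> z")
      case True
      define X where "X = {u, y, p}"
      have X: "X \<subseteq> V" "card X < 4" unfolding X_def using V pqV card3[of u y p] by auto
      have "connected_component (- J) (pos z) (pos x)"
        by (rule sep[OF kc X _ _ gen[OF X] zJ]) (use V ne nu True in \<open>auto simp: X_def\<close>)
      then show False using nc' by simp
    next
      case pF: False
      show False
      proof (cases "q \<noteq> x \<and> q \<noteq> z")
        case True
        define X where "X = {u, y, q}"
        have X: "X \<subseteq> V" "card X < 4" unfolding X_def using V pqV card3[of u y q] by auto
        have "connected_component (- J) (pos z) (pos x)"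
          by (rule sep[OF kc X _ _ gen[OF X] zJ]) (use V ne nu True in \<open>auto simp: X_def\<close>)
        then show False using nc' by simp
      next
        case qF: False
        have pqxz: "{p,q} = {x,z}" using pF qF pqV by auto
        obtain x' where x': "E x x'" "x' \<notin> {u,y,z}"
          using degree[OF kc V(2), of "{u,y,z}"] card3[of u y z] by auto
        have x'V: "x' \<in> V" "x' \<noteq> x" using E_V[OF x'(1)] by auto
        define X where "X = {u, y, x}"
        have X: "X \<subseteq> V" "card X < 4" unfolding X_def using V card3[of u y x] by auto
        have "p \<in> X \<or> q \<in> X" using pqxz unfolding X_def by auto
        have c1: "connected_component (- J) (pos z) (pos x')"
          by (rule sep[OF kc X _ _ gen[OF X _ _ \<open>p \<in> X \<or> q \<in> X\<close>] zJ])
             (use V ne nu x' x'V in \<open>auto simp: X_def\<close>)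
        have xx'n: "x \<noteq> u" "x' \<noteq> u" "x \<noteq> y" "x' \<noteq> y" using x' nu by auto
        have "{x,x'} \<noteq> {u,y}" using xx'n by auto
        moreover have "{x,x'} \<noteq> {p,q}" using pqxz x' x'V by auto
        ultimately have "I x x' \<inter> I u y = {}" using uniq[OF x'(1)] by blast
        then have img: "path_image (D x x') \<inter> J = {}" using EA'[OF x'(1) xx'n] by blast
        have c2: "connected_component (- J) (pos x') (pos x)"
        proof (rule connected_componentI[of "path_image (D x x')"])
          show "connected (path_image (D x x'))" using E_arc[OF x'(1)] by (simp add: arc_imp_path connected_path_image)
          show "path_image (D x x') \<subseteq> - J" using img by blast
          show "pos x \<in> path_image (D x x')" using E_start[OF x'(1)] pathstart_in_path_image by metis
          show "pos x' \<in> path_image (D x x')" using E_fin[OF x'(1)] pathfinish_in_path_image by metis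
        qed
        show False using connected_component_trans[OF c1 c2] nc' by simp
      qed
    qed
  qed
qed

end


context op1 begin

lemma pair_meet:
  assumes "E u a" "E u b" "a \<noteq> b"
  shows "path_image (D u a) \<inter> path_image (D u b) = {pos u}"
proof -
  have n: "u \<noteq> a" "u \<noteq> b" using E_V[OF assms(1)] E_V[OF assms(2)] by auto
  have d: "I u a \<inter> I u b = {}"
    by (rule share_nocross[OF assms(1) assms(2)]) (use n assms(3) in auto)
  have m: "path_image (D u a) \<inter> path_image (D u b) = pos ` ({u,a} \<inter> {u,b})" by (rule img_meet[OF assms(1) assms(2) d])
  have uu: "{u,a} \<inter> {u,b} = {u}" using n assms(3) by auto
  show ?thesis unfolding m uu by simp
qed

lemma end_meet:
  assumes "E u x" "E x y" "u \<noteq> y"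
  shows "path_image (D x y) \<inter> path_image (D u x) = {pos x}"
proof -
  have n: "u \<noteq> x" "x \<noteq> y" using E_V[OF assms(1)] E_V[OF assms(2)] by auto
  have d: "I x y \<inter> I u x = {}"
    by (rule share_nocross[OF assms(2) assms(1)]) (use n assms(3) in auto)
  have m: "path_image (D x y) \<inter> path_image (D u x) = pos ` ({x,y} \<inter> {u,x})" by (rule img_meet[OF assms(2) assms(1) d])
  have uu: "{x,y} \<inter> {u,x} = {x}" using n assms(3) by auto
  show ?thesis unfolding m uu by simp
qed

lemma jordan_tri:
  assumes e: "E u x" "E u y" "E x y"
  defines "g \<equiv> D u x +++ (D x y +++ reversepath (D u y))"
  shows "simple_path g" "pathfinish g = pathstart g"
    "path_image g = path_image (D u x) \<union> path_image (D x y) \<union> path_image (D u y)"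
proof -
  have n: "u \<noteq> x" "u \<noteq> y" "x \<noteq> y" using E_V[OF e(1)] E_V[OF e(2)] E_V[OF e(3)] by auto
  have yx: "path_image (D x y) \<inter> path_image (D u y) = {pos y}"
  proof -
    have "E y x" using E_V[OF e(3)] by simp
    have "E u y" by (rule e(2))
    have "path_image (D y x) \<inter> path_image (D u y) = {pos y}"
      by (rule end_meet[OF e(2) \<open>E y x\<close>]) (use n in auto)
    moreover have "path_image (D y x) = path_image (D x y)" using E_rev[OF e(3)] by simp
    ultimately show ?thesis by simp
  qed
  have a2: "arc (D x y +++ reversepath (D u y))"
  proof (rule arc_join)
    show "arc (D x y)" by (rule E_arc[OF e(3)])
    show "arc (reversepath (D u y))" using E_arc[OF e(2)] by (simp add: arc_reversepath)
    show "pathfinish (D x y) = pathstart (reversepath (D u y))" using E_fin[OF e(3)] E_fin[OF e(2)] by simp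
    show "path_image (D x y) \<inter> path_image (reversepath (D u y)) \<subseteq> {pathstart (reversepath (D u y))}"
      using yx E_fin[OF e(2)] by simp
  qed
  have pi2: "path_image (D x y +++ reversepath (D u y)) = path_image (D x y) \<union> path_image (D u y)"
    using E_fin[OF e(3)] E_fin[OF e(2)] by (simp add: path_image_join)
  show "simple_path g" unfolding g_def
  proof (rule simple_path_join_loop)
    show "arc (D u x)" by (rule E_arc[OF e(1)])
    show "arc (D x y +++ reversepath (D u y))" by (rule a2)
    show "pathfinish (D u x) = pathstart (D x y +++ reversepath (D u y))" using E_fin[OF e(1)] E_start[OF e(3)] by simp
    show "pathfinish (D x y +++ reversepath (D u y)) = pathstart (D u x)" using E_start[OF e(1)] E_start[OF e(2)] by simp
    have "path_image (D u x) \<inter> path_image (D x y) = {pos x}" using end_meet[OF e(1) e(3)] n by auto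
    moreover have "path_image (D u x) \<inter> path_image (D u y) = {pos u}" by (rule pair_meet[OF e(1) e(2) n(3)])
    ultimately show "path_image (D u x) \<inter> path_image (D x y +++ reversepath (D u y))
        \<subseteq> {pathstart (D u x), pathstart (D x y +++ reversepath (D u y))}"
      unfolding pi2 using E_start[OF e(1)] E_start[OF e(3)] by auto
  qed
  show "pathfinish g = pathstart g" unfolding g_def using E_start[OF e(1)] E_start[OF e(2)] by simp
  show "path_image g = path_image (D u x) \<union> path_image (D x y) \<union> path_image (D u y)"
    unfolding g_def using E_fin[OF e(1)] E_start[OF e(3)] pi2 by (simp add: path_image_join Un_assoc)
qed

end


lemma FR:
  fixes Bc C :: "complex set"
  assumes "open Bc" "connected Bc" "Bc \<inter> C = {}" "closed C" "p \<notin> C" "p \<in> frontier Bc" "b0 \<in> Bc"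
  shows "connected_component (- C) b0 p"
proof -
  have "open (- C)" using assms(4) by auto
  then obtain e where e: "e > 0" "ball p e \<subseteq> - C" using assms(5) open_contains_ball by blast
  have "p \<in> closure Bc" using assms(6) by (simp add: frontier_def)
  then obtain q where q: "q \<in> Bc" "dist q p < e" using e(1) closure_approachable by blast
  have "q \<in> ball p e" using q by (simp add: dist_commute)
  then have "Bc \<inter> ball p e \<noteq> {}" using q by blast
  then have "connected (Bc \<union> ball p e)" using connected_Un[OF assms(2) connected_ball] by blast
  moreover have "Bc \<union> ball p e \<subseteq> - C" using e assms(3) by blast
  moreover have "b0 \<in> Bc \<union> ball p e" "p \<in> Bc \<union> ball p e" using assms(7) e by auto
  ultimately show ?thesis by (rule connected_componentI)
qed

lemma inside_outside_sep:
  fixes S :: "complex set"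
  assumes "a \<in> inside S" "b \<in> outside S"
  shows "\<not> connected_component (- S) a b"
proof
  assume "connected_component (- S) a b"
  then have "connected_component_set (- S) a = connected_component_set (- S) b"
    using connected_component_eq[of b "- S" a] by simp
  moreover have "bounded (connected_component_set (- S) a)" using assms(1) by (simp add: inside_def)
  moreover have "\<not> bounded (connected_component_set (- S) b)" using assms(2) by (simp add: outside_def)
  ultimately show False by simp
qed

context op1 begin

lemma main_cross:
  assumes kc: "k_connected V E 4"
    and e: "E u x" "E u y" "E x y" "E u w" "E u z"
    and rw: "rot_between pos D u x w y" and rz: "rot_between pos D u x z y"
    and zw: "z \<noteq> w" and cr: "crosses D x y u w"
  shows False
proof -
  have ne: "x \<noteq> w" "w \<noteq> y" "x \<noteq> y" "x \<noteq> z" "z \<noteq> y" using rw rz unfolding rot_between_def by auto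
  have nu: "u \<noteq> x" "u \<noteq> y" "u \<noteq> w" "u \<noteq> z" using E_V[OF e(1)] E_V[OF e(2)] E_V[OF e(4)] E_V[OF e(5)] by auto
  have V: "u \<in> V" "x \<in> V" "y \<in> V" "w \<in> V" "z \<in> V" using E_V[OF e(1)] E_V[OF e(2)] E_V[OF e(4)] E_V[OF e(5)] by auto
  obtain s t where st: "s \<in> {0<..<1}" "t \<in> {0<..<1}" "D x y s = D u w t"
    using cr unfolding crosses_def by blast
  have img01: "\<And>a b. path_image (D a b) = D a b ` {0..1}" by (simp add: path_image_def)
  define Tri where "Tri = path_image (D u x) \<union> path_image (D u y) \<union> path_image (D x y)"
  have xyy: "path_image (D x y) \<inter> path_image (D u y) = {pos y}"
  proof -
    have "E y x" using E_V[OF e(3)] by simp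
    have "path_image (D y x) \<inter> path_image (D u y) = {pos y}"
      by (rule end_meet[OF e(2) \<open>E y x\<close>]) (use nu in auto)
    moreover have "path_image (D y x) = path_image (D x y)" using E_rev[OF e(3)] by simp
    ultimately show ?thesis by simp
  qed
  have xyx: "path_image (D x y) \<inter> path_image (D u x) = {pos x}" by (rule end_meet[OF e(1) e(3) nu(2)])
  obtain \<tau>a \<tau>b where tab: "\<tau>a \<in> {0<..<t}" "\<tau>b \<in> {0<..1}" "connected_component (- Tri) (D u w \<tau>a) (D u z \<tau>b)"
  proof -
    have a1: "arc (D u x)" "arc (D u y)" "arc (D u w)" "arc (D u z)" using E_arc e by auto
    have a2: "D u x 0 = pos u" "D u y 0 = pos u" "D u w 0 = pos u" "D u z 0 = pos u" using E_0 e by auto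
    have a3: "D u x ` {0..1} \<inter> D u y ` {0..1} \<subseteq> {pos u}" using pair_meet[OF e(1) e(2) ne(3)] img01 by simp
    have a4: "D u x ` {0..1} \<inter> D u w ` {0..1} \<subseteq> {pos u}" using pair_meet[OF e(1) e(4) ne(1)] img01 by simp
    have a5: "D u x ` {0..1} \<inter> D u z ` {0..1} \<subseteq> {pos u}" using pair_meet[OF e(1) e(5) ne(4)] img01 by simp
    have a6: "D u y ` {0..1} \<inter> D u w ` {0..1} \<subseteq> {pos u}" using pair_meet[OF e(2) e(4)] ne img01 by simp
    have a7: "D u y ` {0..1} \<inter> D u z ` {0..1} \<subseteq> {pos u}" using pair_meet[OF e(2) e(5)] ne img01 by simp
    have a8: "compact (path_image (D x y))" using E_arc[OF e(3)] by (simp add: arc_imp_path compact_path_image)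
    have a9: "pos u \<notin> path_image (D x y)" using vert_on_img[OF e(3) V(1)] nu by auto
    have a10: "path_image (D x y) \<inter> D u x ` {0..1} \<subseteq> {D u x 1}" using xyx img01 E_1[OF e(1)] by simp
    have a11: "path_image (D x y) \<inter> D u y ` {0..1} \<subseteq> {D u y 1}" using xyy img01 E_1[OF e(2)] by auto
    have a12: "0 < t" "t \<le> 1" using st by auto
    have a13: "\<exists>r0>0. \<forall>r. 0 < r \<and> r < r0 \<longrightarrow>
        orient (D u x (Inf {t\<in>{0..1}. dist (D u x t) (pos u) = r})) (D u w (Inf {t\<in>{0..1}. dist (D u w t) (pos u) = r}))
               (D u y (Inf {t\<in>{0..1}. dist (D u y t) (pos u) = r})) > 0"
      using rw unfolding rot_between_def first_hit_def by (elim conjE) assumption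
    have a14: "\<exists>r0>0. \<forall>r. 0 < r \<and> r < r0 \<longrightarrow>
        orient (D u x (Inf {t\<in>{0..1}. dist (D u x t) (pos u) = r})) (D u z (Inf {t\<in>{0..1}. dist (D u z t) (pos u) = r}))
               (D u y (Inf {t\<in>{0..1}. dist (D u y t) (pos u) = r})) > 0"
      using rz unfolding rot_between_def first_hit_def by (elim conjE) assumption
    have "\<exists>\<tau>a \<tau>b. \<tau>a \<in> {0<..<t} \<and> \<tau>b \<in> {0<..1} \<and>
           connected_component (- (D u x ` {0..1} \<union> D u y ` {0..1} \<union> path_image (D x y))) (D u w \<tau>a) (D u z \<tau>b)"
      by (rule local_claim[OF a1 a2 a3 a4 a5 a6 a7 a8 a9 a10 a11 a12 a13 a14])
    then show ?thesis using that unfolding Tri_def img01 by blast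
  qed
  have cont: "\<And>a b. E a b \<Longrightarrow> continuous_on {0..1} (D a b)" using E_cont by blast
  have zpath: "connected_component (- Tri) (D u z \<tau>b) (pos z)"
  proof (rule connected_componentI[of "D u z ` {\<tau>b..1}"])
    have "continuous_on {\<tau>b..1} (D u z)"
      using continuous_on_subset[OF cont[OF e(5)], of "{\<tau>b..1}"] tab by auto
    then show "connected (D u z ` {\<tau>b..1})" by (rule connected_continuous_image) simp
    show "D u z \<tau>b \<in> D u z ` {\<tau>b..1}" using tab by auto
    show "pos z \<in> D u z ` {\<tau>b..1}" using tab E_1[OF e(5)] by (auto intro!: image_eqI[where x=1])
    have dxy: "I x y \<inter> I u z = {}"
    proof (rule ccontr)
      assume "I x y \<inter> I u z \<noteq> {}"
      have "I x y \<inter> I u w \<noteq> {}" using st I_mem[of s x y] I_mem[of t u w] by auto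
      have "{u,w} = {u,z}"
        by (rule once_edge[OF e(3) e(4) e(5)]) (use nu \<open>I x y \<inter> I u w \<noteq> {}\<close> \<open>I x y \<inter> I u z \<noteq> {}\<close> in auto)
      then show False using zw nu by (auto simp: doubleton_eq_iff)
    qed
    have m: "path_image (D x y) \<inter> path_image (D u z) = pos ` ({x,y} \<inter> {u,z})"
      by (rule img_meet[OF e(3) e(5) dxy])
    have "{x,y} \<inter> {u,z} = {}" using nu ne by auto
    then have m': "path_image (D x y) \<inter> path_image (D u z) = {}" using m by simp
    show "D u z ` {\<tau>b..1} \<subseteq> - Tri"
    proof
      fix p assume "p \<in> D u z ` {\<tau>b..1}"
      then obtain r where r: "r \<in> {\<tau>b..1}" "p = D u z r" by auto
      have r01: "r \<in> {0..1}" using r tab by auto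
      have pz: "p \<in> path_image (D u z)" using r01 r by (auto simp: path_image_def)
      have pu: "p \<noteq> pos u"
      proof
        assume "p = pos u"
        then have "D u z r = D u z 0" using r E_0[OF e(5)] by simp
        then have "r = 0" using E_injD[OF e(5), of r 0] r01 by auto
        then show False using r tab by auto
      qed
      have "p \<notin> path_image (D u x)" using pair_meet[OF e(1) e(5) ne(4)] pz pu by blast
      moreover have "p \<notin> path_image (D u y)" using pair_meet[OF e(2) e(5)] ne pz pu by blast
      moreover have "p \<notin> path_image (D x y)" using m' pz by blast
      ultimately show "p \<in> - Tri" unfolding Tri_def by blast
    qed
  qed
  have zT: "pos z \<notin> Tri" using connected_component_in[OF zpath] by simp
  have P2o: "\<And>r. r \<in> {0<..<t} \<Longrightarrow> D u w r \<notin> Tri"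
  proof -
    fix r assume r: "r \<in> {0<..<t}"
    have r01: "r \<in> {0<..<1}" using r st by auto
    have pw: "D u w r \<in> path_image (D u w)" using r01 by (auto simp: path_image_def)
    have pu: "D u w r \<noteq> pos u"
    proof
      assume "D u w r = pos u"
      then have "D u w r = D u w 0" using E_0[OF e(4)] by simp
      then have "r = 0" using E_injD[OF e(4), of r 0] r01 by auto
      then show False using r by auto
    qed
    have "D u w r \<notin> path_image (D u x)" using pair_meet[OF e(1) e(4) ne(1)] pw pu by blast
    moreover have "D u w r \<notin> path_image (D u y)" using pair_meet[OF e(2) e(4)] ne pw pu by blast
    moreover have "D u w r \<notin> path_image (D x y)"
    proof
      assume a: "D u w r \<in> path_image (D x y)"
      have iw: "D u w r \<in> I u w" using I_mem[OF r01] .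
      have "D u w r \<noteq> pos x" "D u w r \<noteq> pos y" using u_not_I[OF e(4)] V iw by metis+
      then have "D u w r \<in> I x y" using a img_split[OF e(3)] by auto
      then obtain s' where s': "s' \<in> {0<..<1}" "D x y s' = D u w r" by (auto simp: I_def)
      have "s = s'"
        by (rule once_param[OF e(3) e(4) _ st(1) st(2) s'(1) r01 st(3) s'(2)]) (use nu in auto)
      then have "D u w r = D u w t" using st s' by simp
      then have "r = t" using E_injD[OF e(4), of r t] r01 st by auto
      then show False using r by auto
    qed
    ultimately show "D u w r \<notin> Tri" unfolding Tri_def by blast
  qed
  have P2z: "\<And>r. r \<in> {0<..<t} \<Longrightarrow> connected_component (- Tri) (D u w r) (pos z)"
  proof -
    fix r assume r: "r \<in> {0<..<t}"
    have "connected_component (- Tri) (D u w r) (D u w \<tau>a)"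
    proof (rule connected_componentI[of "D u w ` {0<..<t}"])
      have sub: "{0<..<t} \<subseteq> {0..(1::real)}" using st by auto
      have "continuous_on {0<..<t} (D u w)"
        by (rule continuous_on_subset[OF cont[OF e(4)] sub])
      then show "connected (D u w ` {0<..<t})" by (rule connected_continuous_image) simp
      show "D u w ` {0<..<t} \<subseteq> - Tri" using P2o by blast
      show "D u w r \<in> D u w ` {0<..<t}" using r by auto
      show "D u w \<tau>a \<in> D u w ` {0<..<t}" using tab by auto
    qed
    then show "connected_component (- Tri) (D u w r) (pos z)"
      using tab(3) zpath connected_component_trans by blast
  qed
  have jt: "simple_path (D u x +++ (D x y +++ reversepath (D u y)))"
     "pathfinish (D u x +++ (D x y +++ reversepath (D u y))) = pathstart (D u x +++ (D x y +++ reversepath (D u y)))"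
     "path_image (D u x +++ (D x y +++ reversepath (D u y))) = path_image (D u x) \<union> path_image (D x y) \<union> path_image (D u y)"
    using jordan_tri[OF e(1) e(2) e(3)] by auto
  have TriJ: "path_image (D u x +++ (D x y +++ reversepath (D u y))) = Tri" unfolding jt(3) Tri_def by blast
  note J = Jordan_inside_outside[OF jt(1) jt(2), unfolded TriJ]
  define Bc where "Bc = (if pos z \<in> inside Tri then outside Tri else inside Tri)"
  have Bc: "Bc \<noteq> {}" "open Bc" "connected Bc" "frontier Bc = Tri" "Bc \<inter> Tri = {}"
    unfolding Bc_def using J by auto
  have Bcz: "\<And>p. p \<in> Bc \<Longrightarrow> \<not> connected_component (- Tri) (pos z) p"
  proof -
    fix p assume p: "p \<in> Bc"
    show "\<not> connected_component (- Tri) (pos z) p"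
    proof (cases "pos z \<in> inside Tri")
      case True
      then have "p \<in> outside Tri" using p unfolding Bc_def by simp
      then show ?thesis using inside_outside_sep[OF True] by blast
    next
      case False
      then have zo: "pos z \<in> outside Tri" using J zT by blast
      have "p \<in> inside Tri" using p False unfolding Bc_def by simp
      then have "\<not> connected_component (- Tri) p (pos z)" using inside_outside_sep[OF _ zo] by blast
      then show ?thesis using connected_component_sym by blast
    qed
  qed
  define P2 where "P2 = D u w ` {0..t}"
  define C1 where "C1 = path_image (D u x) \<union> D x y ` {0..s} \<union> P2"
  define C2 where "C2 = P2 \<union> D x y ` {s..1} \<union> path_image (D u y)"
  have xyT: "D x y ` {0..s} \<subseteq> Tri" "D x y ` {s..1} \<subseteq> Tri"
    using st unfolding Tri_def path_image_def by auto
  have P2Bc: "P2 \<inter> Bc = {}"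
  proof (rule ccontr)
    assume "P2 \<inter> Bc \<noteq> {}"
    then obtain r where r: "r \<in> {0..t}" "D u w r \<in> Bc" unfolding P2_def by blast
    show False
    proof (cases "r \<in> {0<..<t}")
      case True
      have "connected_component (- Tri) (D u w r) (pos z)" using P2z[OF True] .
      then have "connected_component (- Tri) (pos z) (D u w r)" by (rule connected_component_sym)
      then show False using Bcz[OF r(2)] by simp
    next
      case False
      then have "r = 0 \<or> r = t" using r by auto
      moreover have "D u w 0 \<in> Tri" using E_0[OF e(4)] E_start[OF e(1)] pathstart_in_path_image
        unfolding Tri_def by (metis UnI1)
      moreover have "D u w t \<in> Tri" using st xyT by force
      ultimately show False using r Bc(5) by auto
    qed
  qed
  have C1Bc: "C1 \<inter> Bc = {}" using P2Bc xyT Bc(5) unfolding C1_def Tri_def by blast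
  have C2Bc: "C2 \<inter> Bc = {}" using P2Bc xyT Bc(5) unfolding C2_def Tri_def by blast
  have cpt: "\<And>a b c d. E a b \<Longrightarrow> 0 \<le> c \<Longrightarrow> d \<le> 1 \<Longrightarrow> compact (D a b ` {c..d})"
  proof -
    fix a b and c d :: real assume ab: "E a b" "0 \<le> c" "d \<le> 1"
    have sub: "{c..d} \<subseteq> {0..(1::real)}" using ab by auto
    have "continuous_on {c..d} (D a b)" by (rule continuous_on_subset[OF cont[OF ab(1)] sub])
    then show "compact (D a b ` {c..d})" by (rule compact_continuous_image) simp
  qed
  have P2c: "compact P2" "connected P2"
  proof -
    show "compact P2" unfolding P2_def by (rule cpt[OF e(4)]) (use st in auto)
    have sub: "{0..t} \<subseteq> {0..(1::real)}" using st by auto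
    have "continuous_on {0..t} (D u w)" by (rule continuous_on_subset[OF cont[OF e(4)] sub])
    then show "connected P2" unfolding P2_def by (rule connected_continuous_image) simp
  qed
  have pc: "\<And>a b. E a b \<Longrightarrow> compact (path_image (D a b))"
    using E_arc by (simp add: arc_imp_path compact_path_image)
  have C1c: "compact C1" unfolding C1_def
    by (intro compact_Un pc[OF e(1)] cpt[OF e(3)] P2c(1)) (use st in auto)
  have C2c: "compact C2" unfolding C2_def
    by (intro compact_Un pc[OF e(2)] cpt[OF e(3)] P2c(1)) (use st in auto)
  have TriC: "Tri \<subseteq> C1 \<union> C2"
  proof -
    have "path_image (D x y) \<subseteq> D x y ` {0..s} \<union> D x y ` {s..1}"
      unfolding path_image_def by (auto simp: image_iff) (metis atLeastAtMost_iff linear)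
    then show ?thesis unfolding Tri_def C1_def C2_def by blast
  qed
  have xs0: "\<And>r. r \<in> {s..1} \<Longrightarrow> D x y r \<noteq> pos x"
  proof
    fix r assume r: "r \<in> {s..1}" "D x y r = pos x"
    then have "D x y r = D x y 0" using E_0[OF e(3)] by simp
    then have "r = 0" using E_injD[OF e(3), of r 0] r st by auto
    then show False using r st by auto
  qed
  have ys1: "\<And>r. r \<in> {0..s} \<Longrightarrow> D x y r \<noteq> pos y"
  proof
    fix r assume r: "r \<in> {0..s}" "D x y r = pos y"
    then have "D x y r = D x y 1" using E_1[OF e(3)] by simp
    then have "r = 1" using E_injD[OF e(3), of r 1] r st by auto
    then show False using r st by auto
  qed
  have P2w: "P2 \<subseteq> path_image (D u w)" unfolding P2_def path_image_def using st by auto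
  have C12: "C1 \<inter> C2 = P2"
  proof
    show "P2 \<subseteq> C1 \<inter> C2" unfolding C1_def C2_def by blast
    show "C1 \<inter> C2 \<subseteq> P2"
    proof
      fix p assume p: "p \<in> C1 \<inter> C2"
      show "p \<in> P2"
      proof (rule ccontr)
        assume np: "p \<notin> P2"
        have pu: "pos u \<in> P2" unfolding P2_def using E_0[OF e(4)] st by (auto intro!: image_eqI[where x=0])
        have pc: "D x y s \<in> P2" unfolding P2_def using st by auto
        have p1: "p \<in> path_image (D u x) \<or> p \<in> D x y ` {0..s}" using p np unfolding C1_def by blast
        have p2: "p \<in> D x y ` {s..1} \<or> p \<in> path_image (D u y)" using p np unfolding C2_def by blast
        have xysub: "D x y ` {0..s} \<subseteq> path_image (D x y)" "D x y ` {s..1} \<subseteq> path_image (D x y)"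
          unfolding path_image_def using st by auto
        show False
        proof (cases "p \<in> path_image (D u x)")
          case True
          show False
          proof (cases "p \<in> path_image (D u y)")
            case True
            then have "p = pos u" using pair_meet[OF e(1) e(2) ne(3)] \<open>p \<in> path_image (D u x)\<close> by blast
            then show False using np pu by simp
          next
            case False
            then obtain r where r: "r \<in> {s..1}" "p = D x y r" using p2 by auto
            then have "p \<in> path_image (D x y)" using xysub by auto
            then have "p = pos x" using xyx \<open>p \<in> path_image (D u x)\<close> by blast
            then show False using xs0 r by simp
          qed
        next
          case False
          then obtain r where r: "r \<in> {0..s}" "p = D x y r" using p1 by auto
          show False
          proof (cases "p \<in> path_image (D u y)")
            case True
            have "p \<in> path_image (D x y)" using r xysub by auto
            then have "p = pos y" using xyy True by blast
            then show False using ys1 r by simp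
          next
            case False
            then obtain r' where r': "r' \<in> {s..1}" "p = D x y r'" using p2 by auto
            have "r = r'" using E_injD[OF e(3), of r r'] r r' st by auto
            then have "r = s" using r r' by auto
            then show False using np pc r by simp
          qed
        qed
      qed
    qed
  qed
  have yC1: "pos y \<notin> C1"
  proof -
    have "pos y \<notin> path_image (D u x)" using vert_on_img[OF e(1) V(3)] ne nu by auto
    moreover have "pos y \<notin> D x y ` {0..s}" using ys1 by (metis imageE)
    moreover have "pos y \<notin> P2" using P2w vert_on_img[OF e(4) V(3)] ne nu by auto
    ultimately show ?thesis unfolding C1_def by blast
  qed
  have xC2: "pos x \<notin> C2"
  proof -
    have "pos x \<notin> path_image (D u y)" using vert_on_img[OF e(2) V(2)] ne nu by auto
    moreover have "pos x \<notin> D x y ` {s..1}" using xs0 by (metis imageE)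
    moreover have "pos x \<notin> P2" using P2w vert_on_img[OF e(4) V(2)] ne nu by auto
    ultimately show ?thesis unfolding C2_def by blast
  qed
  have "pos y \<in> path_image (D u y)" using E_fin[OF e(2)] pathfinish_in_path_image by metis
  then have yT: "pos y \<in> Tri" unfolding Tri_def by blast
  have "pos x \<in> path_image (D u x)" using E_fin[OF e(1)] pathfinish_in_path_image by metis
  then have xT: "pos x \<in> Tri" unfolding Tri_def by blast
  obtain b0 where b0: "b0 \<in> Bc" using Bc(1) by blast
  have f1: "connected_component (- C1) b0 (pos y)"
    by (rule FR[OF Bc(2) Bc(3) _ compact_imp_closed[OF C1c] yC1 _ b0]) (use C1Bc Bc(4) yT in auto)
  have f2: "connected_component (- C2) b0 (pos x)"
    by (rule FR[OF Bc(2) Bc(3) _ compact_imp_closed[OF C2c] xC2 _ b0]) (use C2Bc Bc(4) xT in auto)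
  have alt: "\<not> connected_component (- C1) (pos z) (pos y) \<or> \<not> connected_component (- C2) (pos z) (pos x)"
  proof (rule ccontr)
    assume "\<not> ?thesis"
    then have h: "connected_component (- C1) (pos z) (pos y)" "connected_component (- C2) (pos z) (pos x)" by auto
    have g1: "connected_component (- C1) (pos z) b0"
      using connected_component_trans[OF h(1) connected_component_sym[OF f1]] .
    have g2: "connected_component (- C2) (pos z) b0"
      using connected_component_trans[OF h(2) connected_component_sym[OF f2]] .
    have "connected (C1 \<inter> C2)" unfolding C12 by (rule P2c(2))
    then have "connected_component (- (C1 \<union> C2)) (pos z) b0"
      by (rule Janiszewski[OF C1c compact_imp_closed[OF C2c] _ g1 g2])
    then have "connected_component (- Tri) (pos z) b0"
      by (rule connected_component_of_subset) (use TriC in blast)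
    then show False using Bcz[OF b0] by simp
  qed
  show False
  proof (cases "connected_component (- C2) (pos z) (pos x)")
    case False
    show False
      by (rule sepF[OF kc e(1) e(2) e(3) e(4) e(5) ne(1) zw ne(4)[symmetric] ne(5) st])
         (use False in \<open>simp add: C2_def P2_def\<close>)
  next
    case True
    then have nc1: "\<not> connected_component (- C1) (pos z) (pos y)" using alt by simp
    have eyx: "E y x" using E_V[OF e(3)] by simp
    have rv: "\<And>r. D y x r = D x y (1 - r)" using E_rev[OF e(3)] by (simp add: reversepath_def)
    have st': "1 - s \<in> {0<..<1}" "D y x (1 - s) = D u w t" using st rv by auto
    have im: "D y x ` {1 - s..1} = D x y ` {0..s}"
    proof
      show "D y x ` {1 - s..1} \<subseteq> D x y ` {0..s}"
      proof
        fix p assume "p \<in> D y x ` {1 - s..1}"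
        then obtain r where r: "r \<in> {1 - s..1}" "p = D y x r" by auto
        then have "p = D x y (1 - r)" "1 - r \<in> {0..s}" using rv by auto
        then show "p \<in> D x y ` {0..s}" by blast
      qed
      show "D x y ` {0..s} \<subseteq> D y x ` {1 - s..1}"
      proof
        fix p assume "p \<in> D x y ` {0..s}"
        then obtain r where r: "r \<in> {0..s}" "p = D x y r" by auto
        then have "p = D y x (1 - r)" "1 - r \<in> {1 - s..1}" using rv by auto
        then show "p \<in> D y x ` {1 - s..1}" by blast
      qed
    qed
    have eqC1: "D u w ` {0..t} \<union> D y x ` {1 - s..1} \<union> path_image (D u x) = C1"
      unfolding im C1_def P2_def by blast
    show False
      by (rule sepF[OF kc e(2) e(1) eyx e(4) e(5) ne(2)[symmetric] zw ne(5) ne(4)[symmetric] st'(1) st(2) st'(2)])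
         (use nc1 eqC1 in simp)
  qed
qed

end


theorem proposition1:
  fixes V :: "'v set" and E :: "'v \<Rightarrow> 'v \<Rightarrow> bool"
    and pos :: "'v \<Rightarrow> complex" and D :: "'v \<Rightarrow> 'v \<Rightarrow> real \<Rightarrow> complex"
    and u x y :: 'v
  assumes "one_plane V E pos D"
    and "k_connected V E 4"
    and "u \<in> V" and "E u x" and "E u y" and "x \<noteq> y"
    and "card {w. E u w \<and> rot_between pos D u x w y} \<ge> 2"
  shows "E x y \<longrightarrow> (\<forall>w. E u w \<and> rot_between pos D u x w y \<longrightarrow> \<not> crosses D x y u w)"
proof (intro impI allI notI)
  fix w
  assume exy: "E x y" and wr: "E u w \<and> rot_between pos D u x w y" and cr: "crosses D x y u w"
  interpret op1 V E pos D by (rule op1.intro) (rule assms(1))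
  let ?S = "{w. E u w \<and> rot_between pos D u x w y}"
  obtain z where z: "z \<in> ?S" "z \<noteq> w"
  proof -
    assume *: "\<And>z. z \<in> ?S \<Longrightarrow> z \<noteq> w \<Longrightarrow> thesis"
    show thesis
    proof (rule ccontr)
      assume "\<not> thesis"
      then have "?S \<subseteq> {w}" using * by blast
      then have "card ?S \<le> card {w}" by (intro card_mono) auto
      then show False using assms(7) by simp
    qed
  qed
  show False
    by (rule main_cross[OF assms(2) assms(4) assms(5) exy _ _ _ _ z(2) cr]) (use wr z(1) in auto)
qed


end
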